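(* Let $\Gamma\subset\Delta^+$ be a non-empty antichain. Then there exist $H\in\mathfrak{h}$ and a positive integer $n$ such that $\alpha(H)$ is a positive integer for every $\alpha\in\Pi$ and $\gamma(H)=n$ for every $\gamma\in\Gamma$.
   Context: Let $\mathfrak{g}$ be a complex finite-dimensional semisimple Lie algebra with Cartan subalgebra $\mathfrak{h}$ contained in a Borel subalgebra $\mathfrak{b}$; $\Delta\supset\Delta^+\supset\Pi$ are the roots, positive roots and simple roots relative to $(\mathfrak{b},\mathfrak{h})$. Partial order: $\alpha\preccurlyeq\beta$ iff $\beta-\alpha$ is a nonnegative integer combination of simple roots. An antichain in $\Delta^+$ is a subset of pairwise non-comparable elements for $\preccurlyeq$. *)

theory Defs
  imports "HOL-Analysis.Analysis"
begin

text \<open>Root systems of complex semisimple Lie algebras are exactly the reduced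
crystallographic root systems, realised in the real span of the roots in the dual
of the Cartan subalgebra, modelled as a Euclidean space with the Killing form.\<close>

definition root_system :: "'a::euclidean_space set \<Rightarrow> bool" where
  "root_system R \<longleftrightarrow>
     finite R \<and> 0 \<notin> R \<and> span R = UNIV \<and>
     (\<forall>\<alpha>\<in>R. \<forall>\<beta>\<in>R. \<beta> - (2 * (\<beta> \<bullet> \<alpha>) / (\<alpha> \<bullet> \<alpha>)) *\<^sub>R \<alpha> \<in> R) \<and>
     (\<forall>\<alpha>\<in>R. \<forall>\<beta>\<in>R. 2 * (\<beta> \<bullet> \<alpha>) / (\<alpha> \<bullet> \<alpha>) \<in> \<int>) \<and>
     (\<forall>\<alpha>\<in>R. \<forall>c::real. c *\<^sub>R \<alpha> \<in> R \<longrightarrow> c = 1 \<or> c = -1)"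

definition is_base :: "'a::euclidean_space set \<Rightarrow> 'a set \<Rightarrow> bool" where
  "is_base R P \<longleftrightarrow> P \<subseteq> R \<and> independent P \<and>
     (\<forall>\<beta>\<in>R. \<exists>c::'a \<Rightarrow> int. \<beta> = (\<Sum>\<alpha>\<in>P. of_int (c \<alpha>) *\<^sub>R \<alpha>) \<and>
        ((\<forall>\<alpha>\<in>P. c \<alpha> \<ge> 0) \<or> (\<forall>\<alpha>\<in>P. c \<alpha> \<le> 0)))"

definition nat_comb :: "'a::euclidean_space set \<Rightarrow> 'a \<Rightarrow> bool" where
  "nat_comb P v \<longleftrightarrow> (\<exists>c::'a \<Rightarrow> nat. v = (\<Sum>\<alpha>\<in>P. of_nat (c \<alpha>) *\<^sub>R \<alpha>))"

definition pos_roots :: "'a::euclidean_space set \<Rightarrow> 'a set \<Rightarrow> 'a set" where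
  "pos_roots R P = {\<beta>\<in>R. nat_comb P \<beta>}"

definition root_le :: "'a::euclidean_space set \<Rightarrow> 'a \<Rightarrow> 'a \<Rightarrow> bool" where
  "root_le P \<alpha> \<beta> \<longleftrightarrow> nat_comb P (\<beta> - \<alpha>)"

definition antichain :: "'a::euclidean_space set \<Rightarrow> 'a set \<Rightarrow> 'a set \<Rightarrow> bool" where
  "antichain R P \<Gamma> \<longleftrightarrow> \<Gamma> \<subseteq> pos_roots R P \<and>
     (\<forall>\<alpha>\<in>\<Gamma>. \<forall>\<beta>\<in>\<Gamma>. root_le P \<alpha> \<beta> \<longrightarrow> \<alpha> = \<beta>)"

end

theory Submission
  imports Defs "HOL-Analysis.Analysis" "HOL-Library.Multiset"
begin

lemma rat_solution:
  fixes I :: "'i set" and F G :: "(('i \<Rightarrow> real) \<times> real) set" and x :: "'i \<Rightarrow> real"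
  assumes "finite I" "finite G"
    and "\<forall>(f,c)\<in>F. (\<forall>i. f i \<in> \<rat>) \<and> c \<in> \<rat>"
    and "\<forall>(g,d)\<in>G. (\<forall>i. g i \<in> \<rat>) \<and> d \<in> \<rat>"
    and "\<forall>(f,c)\<in>F. (\<Sum>i\<in>I. f i * x i) + c = 0"
    and "\<forall>(g,d)\<in>G. (\<Sum>i\<in>I. g i * x i) + d > 0"
  shows "\<exists>q. (\<forall>i\<in>I. q i \<in> \<rat>) \<and> (\<forall>(f,c)\<in>F. (\<Sum>i\<in>I. f i * q i) + c = 0)
            \<and> (\<forall>(g,d)\<in>G. (\<Sum>i\<in>I. g i * q i) + d > 0)"
  using assms
proof (induction I arbitrary: F G x rule: finite_induct)
  case empty
  then show ?case by auto
next
  case (insert i I)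
  show ?case
  proof (cases "\<exists>(e,e0)\<in>F. e i \<noteq> 0")
    case True
    then obtain e e0 where ee: "(e,e0) \<in> F" "e i \<noteq> 0" by auto
    define sub where "sub = (\<lambda>(f::'i\<Rightarrow>real,c::real). (\<lambda>j. f j - f i / e i * e j, c - f i / e i * e0))"
    have erat: "\<forall>j. e j \<in> \<rat>" "e0 \<in> \<rat>" using insert.prems(2) ee by auto
    have ex: "(\<Sum>j\<in>I. e j * x j) + e0 = - (e i * x i)"
      using insert.prems(4) ee insert.hyps by (auto simp: sum.insert)
    have subval: "(\<Sum>j\<in>I. fst (sub (f,c)) j * y j) + snd (sub (f,c))
        = ((\<Sum>j\<in>I. f j * y j) + c) - f i / e i * ((\<Sum>j\<in>I. e j * y j) + e0)" for f c and y :: "'i \<Rightarrow> real"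
      by (simp add: sub_def algebra_simps sum_subtractf sum_distrib_left)
    have subx: "(\<Sum>j\<in>I. fst (sub (f,c)) j * x j) + snd (sub (f,c)) = (\<Sum>j\<in>insert i I. f j * x j) + c" for f c
    proof -
      have "(\<Sum>j\<in>I. fst (sub (f,c)) j * x j) + snd (sub (f,c)) = ((\<Sum>j\<in>I. f j * x j) + c) - f i / e i * (- (e i * x i))"
        using subval[of f c x] ex by simp
      also have "\<dots> = (\<Sum>j\<in>I. f j * x j) + c + f i * x i" using ee(2) by simp
      also have "\<dots> = (\<Sum>j\<in>insert i I. f j * x j) + c" using insert.hyps by simp
      finally show ?thesis .
    qed
    have r1: "\<forall>(f,c)\<in>sub ` F. (\<forall>j. f j \<in> \<rat>) \<and> c \<in> \<rat>"
      using insert.prems(2) erat by (auto simp: sub_def)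
    have r2: "\<forall>(g,d)\<in>sub ` G. (\<forall>j. g j \<in> \<rat>) \<and> d \<in> \<rat>"
      using insert.prems(3) erat by (auto simp: sub_def)
    have s1: "\<forall>(f,c)\<in>sub ` F. (\<Sum>j\<in>I. f j * x j) + c = 0"
    proof (intro ballI)
      fix p assume "p \<in> sub ` F"
      then obtain f c where fc: "(f,c) \<in> F" "p = sub (f,c)" by auto
      then show "case p of (f,c) \<Rightarrow> (\<Sum>j\<in>I. f j * x j) + c = 0"
        using subx[of f c] insert.prems(4) by (auto simp: case_prod_beta)
    qed
    have s2: "\<forall>(g,d)\<in>sub ` G. (\<Sum>j\<in>I. g j * x j) + d > 0"
    proof (intro ballI)
      fix p assume "p \<in> sub ` G"
      then obtain g d where fc: "(g,d) \<in> G" "p = sub (g,d)" by auto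
      then show "case p of (g,d) \<Rightarrow> (\<Sum>j\<in>I. g j * x j) + d > 0"
        using subx[of g d] insert.prems(5) by (auto simp: case_prod_beta)
    qed
    obtain q where q: "\<forall>j\<in>I. q j \<in> \<rat>" "\<forall>(f,c)\<in>sub ` F. (\<Sum>j\<in>I. f j * q j) + c = 0"
      "\<forall>(g,d)\<in>sub ` G. (\<Sum>j\<in>I. g j * q j) + d > 0"
      using insert.IH[OF _ r1 r2 s1 s2] insert.prems(1) by blast
    define qi where "qi = - ((\<Sum>j\<in>I. e j * q j) + e0) / e i"
    define q' where "q' = q(i := qi)"
    have sI: "(\<Sum>j\<in>I. h j * q' j) = (\<Sum>j\<in>I. h j * q j)" for h
      using insert.hyps by (auto simp: q'_def intro!: sum.cong)
    have key: "(\<Sum>j\<in>insert i I. f j * q' j) + c = (\<Sum>j\<in>I. fst (sub (f,c)) j * q j) + snd (sub (f,c))" for f c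
    proof -
      have "(\<Sum>j\<in>insert i I. f j * q' j) + c = f i * qi + ((\<Sum>j\<in>I. f j * q j) + c)"
        using insert.hyps sI by (simp add: sum.insert q'_def)
      moreover have "f i * qi = - (f i / e i * ((\<Sum>j\<in>I. e j * q j) + e0))"
        unfolding qi_def using ee(2) by (simp add: field_simps)
      ultimately show ?thesis using subval[of f c q] by simp
    qed
    have "q' i \<in> \<rat>" unfolding q'_def qi_def using q(1) erat
      by (auto intro!: Rats_divide Rats_add Rats_sum Rats_mult Rats_diff)
    then have "\<forall>j\<in>insert i I. q' j \<in> \<rat>" using q(1) by (auto simp: q'_def)
    moreover have "\<forall>(f,c)\<in>F. (\<Sum>j\<in>insert i I. f j * q' j) + c = 0"
      using q(2) key by force
    moreover have "\<forall>(g,d)\<in>G. (\<Sum>j\<in>insert i I. g j * q' j) + d > 0"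
      using q(3) key by force
    ultimately show ?thesis by blast
  next
    case False
    then have F0: "\<forall>(f,c)\<in>F. f i = 0" by auto
    define m where "m = (\<lambda>(g::'i\<Rightarrow>real,d::real). (\<Sum>j\<in>insert i I. g j * x j) + d)"
    define eps where "eps = Min (insert 1 ((\<lambda>(g,d). m (g,d) / (\<bar>g i\<bar> + 1)) ` G))"
    have fin: "finite (insert 1 ((\<lambda>(g,d). m (g,d) / (\<bar>g i\<bar> + 1)) ` G))" using insert.prems(1) by auto
    have mpos: "m (g,d) > 0" if "(g,d) \<in> G" for g d using insert.prems(5) that by (auto simp: m_def)
    have epspos: "eps > 0" unfolding eps_def using fin mpos
      by (subst Min_gr_iff) (auto intro!: divide_pos_pos simp: add_pos_nonneg)
    have epsle: "eps \<le> m (g,d) / (\<bar>g i\<bar> + 1)" if "(g,d) \<in> G" for g d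
      unfolding eps_def using fin that by (intro Min_le) auto
    obtain r where r: "r \<in> \<rat>" "x i - eps < r" "r < x i + eps"
      using Rats_dense_in_real[of "x i - eps" "x i + eps"] epspos by auto
    define G' where "G' = (\<lambda>(g::'i\<Rightarrow>real,d::real). (g, d + g i * r)) ` G"
    have r2: "\<forall>(g,d)\<in>G'. (\<forall>j. g j \<in> \<rat>) \<and> d \<in> \<rat>"
      using insert.prems(3) r(1) by (auto simp: G'_def intro!: Rats_add Rats_mult)
    have s1: "\<forall>(f,c)\<in>F. (\<Sum>j\<in>I. f j * x j) + c = 0"
    proof (intro ballI)
      fix p assume p: "p \<in> F"
      obtain f c where fc: "p = (f,c)" by (cases p)
      then have "(\<Sum>j\<in>insert i I. f j * x j) + c = 0" "f i = 0" using p insert.prems(4) F0 by auto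
      then show "case p of (f,c) \<Rightarrow> (\<Sum>j\<in>I. f j * x j) + c = 0" using fc insert.hyps by simp
    qed
    have s2: "\<forall>(g,d)\<in>G'. (\<Sum>j\<in>I. g j * x j) + d > 0"
    proof (intro ballI)
      fix p assume "p \<in> G'"
      then obtain g d where gd: "(g,d) \<in> G" and pe: "p = (g, d + g i * r)" by (auto simp: G'_def)
      have e1: "(\<Sum>j\<in>I. g j * x j) + (d + g i * r) = m (g,d) + g i * (r - x i)"
        using insert.hyps by (simp add: m_def sum.insert algebra_simps)
      have "\<bar>g i * (r - x i)\<bar> \<le> \<bar>g i\<bar> * eps"
        using r by (auto simp: abs_mult intro!: mult_left_mono)
      moreover have "\<bar>g i\<bar> * eps < m (g,d)"
      proof -
        have "(\<bar>g i\<bar> + 1) * eps \<le> m (g,d)" using epsle[OF gd]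
          by (simp add: pos_le_divide_eq mult.commute add_pos_nonneg)
        then show ?thesis using epspos by (simp add: algebra_simps)
      qed
      ultimately show "case p of (g,d) \<Rightarrow> (\<Sum>j\<in>I. g j * x j) + d > 0"
        using e1 pe by auto
    qed
    have fG': "finite G'" using insert.prems(1) by (simp add: G'_def)
    obtain q where q: "\<forall>j\<in>I. q j \<in> \<rat>" "\<forall>(f,c)\<in>F. (\<Sum>j\<in>I. f j * q j) + c = 0"
      "\<forall>(g,d)\<in>G'. (\<Sum>j\<in>I. g j * q j) + d > 0"
      using insert.IH[OF fG' insert.prems(2) r2 s1 s2] by blast
    define q' where "q' = q(i := r)"
    have sI: "(\<Sum>j\<in>I. h j * q' j) = (\<Sum>j\<in>I. h j * q j)" for h
      using insert.hyps by (auto simp: q'_def intro!: sum.cong)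
    have "\<forall>j\<in>insert i I. q' j \<in> \<rat>" using q(1) r(1) by (auto simp: q'_def)
    moreover have "\<forall>(f,c)\<in>F. (\<Sum>j\<in>insert i I. f j * q' j) + c = 0"
    proof (intro ballI)
      fix p assume p: "p \<in> F"
      obtain f c where fc: "p = (f,c)" by (cases p)
      then have "(\<Sum>j\<in>I. f j * q j) + c = 0" "f i = 0" using p q(2) F0 by auto
      then show "case p of (f,c) \<Rightarrow> (\<Sum>j\<in>insert i I. f j * q' j) + c = 0" using fc insert.hyps sI by simp
    qed
    moreover have "\<forall>(g,d)\<in>G. (\<Sum>j\<in>insert i I. g j * q' j) + d > 0"
    proof (clarify)
      fix g d assume "(g,d) \<in> G"
      then have "(\<Sum>j\<in>I. g j * q j) + (d + g i * r) > 0" using q(3) by (force simp: G'_def)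
      then show "(\<Sum>j\<in>insert i I. g j * q' j) + d > 0"
        using insert.hyps sI by (simp add: sum.insert q'_def algebra_simps)
    qed
    ultimately show ?thesis by blast
  qed
qed

lemma common_denom:
  assumes "finite I" "\<forall>i\<in>I. q i \<in> \<rat>"
  shows "\<exists>D::nat. D > 0 \<and> (\<forall>i\<in>I. real D * q i \<in> \<int>)"
  using assms
proof (induction I rule: finite_induct)
  case empty
  then show ?case by (intro exI[of _ 1]) auto
next
  case (insert i I)
  obtain D where D: "D > 0" "\<forall>j\<in>I. real D * q j \<in> \<int>" using insert by auto
  obtain a b where ab: "b > 0" "q i = of_int a / of_int b" using insert.prems Rats_cases' by blast
  define D' where "D' = D * nat b"
  have "D' > 0" using D ab by (simp add: D'_def)
  moreover have "real D' * q i \<in> \<int>"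
    using ab by (simp add: D'_def)
  moreover have "real D' * q j \<in> \<int>" if "j \<in> I" for j
  proof -
    have "real D' = of_int b * real D" using ab by (simp add: D'_def)
    then have e: "real D' * q j = of_int b * (real D * q j)" by simp
    have "real D * q j \<in> \<int>" using D(2) that by blast
    then have "of_int b * (real D * q j) \<in> \<int>" using Ints_mult[OF Ints_of_int] by blast
    then show ?thesis unfolding e .
  qed
  ultimately show ?case by blast
qed

lemma exists_dual_vec:
  fixes P :: "'a::euclidean_space set"
  assumes "independent P"
  shows "\<exists>H. \<forall>\<alpha>\<in>P. \<alpha> \<bullet> H = t \<alpha>"
proof -
  obtain g where g: "linear g" "\<forall>x\<in>P. g x = t x"
    using linear_independent_extend[OF assms] by blast
  define H where "H = (\<Sum>b\<in>Basis. g b *\<^sub>R b)"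
  have "x \<bullet> H = g x" for x
  proof -
    have "x \<bullet> H = (\<Sum>b\<in>Basis. (x \<bullet> b) * g b)" by (simp add: H_def inner_sum_right mult.commute)
    also have "\<dots> = g (\<Sum>b\<in>Basis. (x \<bullet> b) *\<^sub>R b)"
      using g(1) by (simp add: linear_sum linear_scale)
    also have "\<dots> = g x" by (simp add: euclidean_representation)
    finally show ?thesis .
  qed
  then show ?thesis using g(2) by (intro exI[of _ H]) auto
qed

lemma indep_coeffs_zero:
  fixes P :: "'a::euclidean_space set"
  assumes "independent P" "finite P" "(\<Sum>v\<in>P. u v *\<^sub>R v) = 0"
  shows "\<forall>v\<in>P. u v = 0"
  using assms dependent_finite[OF assms(2)] by auto

locale rsb =
  fixes R P :: "'a::euclidean_space set"
  assumes rs: "root_system R" and base: "is_base R P"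
begin

lemma finR: "finite R" and zR: "0 \<notin> R"
  and rrefl: "\<And>\<alpha> \<beta>. \<alpha> \<in> R \<Longrightarrow> \<beta> \<in> R \<Longrightarrow> \<beta> - (2 * (\<beta> \<bullet> \<alpha>) / (\<alpha> \<bullet> \<alpha>)) *\<^sub>R \<alpha> \<in> R"
  and integ: "\<And>\<alpha> \<beta>. \<alpha> \<in> R \<Longrightarrow> \<beta> \<in> R \<Longrightarrow> 2 * (\<beta> \<bullet> \<alpha>) / (\<alpha> \<bullet> \<alpha>) \<in> \<int>"
  and reduced: "\<And>\<alpha> c. \<alpha> \<in> R \<Longrightarrow> c *\<^sub>R \<alpha> \<in> R \<Longrightarrow> c = 1 \<or> c = -1"
  using rs unfolding root_system_def by auto

lemma PR: "P \<subseteq> R" and indP: "independent P"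
  and sgn: "\<And>\<beta>. \<beta> \<in> R \<Longrightarrow> \<exists>c::'a \<Rightarrow> int. \<beta> = (\<Sum>\<alpha>\<in>P. of_int (c \<alpha>) *\<^sub>R \<alpha>) \<and>
        ((\<forall>\<alpha>\<in>P. c \<alpha> \<ge> 0) \<or> (\<forall>\<alpha>\<in>P. c \<alpha> \<le> 0))"
  using base unfolding is_base_def by auto

lemma finP: "finite P" using PR finR finite_subset by blast

lemma neg_root: "\<alpha> \<in> R \<Longrightarrow> - \<alpha> \<in> R"
proof -
  assume a: "\<alpha> \<in> R"
  then have "\<alpha> \<noteq> 0" using zR by auto
  then have "\<alpha> \<bullet> \<alpha> \<noteq> 0" by simp
  then have "\<alpha> - (2 * (\<alpha> \<bullet> \<alpha>) / (\<alpha> \<bullet> \<alpha>)) *\<^sub>R \<alpha> = \<alpha> - 2 *\<^sub>R \<alpha>" by simp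
  also have "\<dots> = - \<alpha>" by (simp add: scaleR_2)
  finally have "\<alpha> - (2 * (\<alpha> \<bullet> \<alpha>) / (\<alpha> \<bullet> \<alpha>)) *\<^sub>R \<alpha> = - \<alpha>" .
  then show ?thesis using rrefl[OF a a] by simp
qed

lemma rootA:
  assumes a: "\<alpha> \<in> R" and b: "\<beta> \<in> R" and ab: "\<alpha> \<bullet> \<beta> > 0" and ne: "\<alpha> \<noteq> \<beta>"
  shows "\<alpha> - \<beta> \<in> R"
proof -
  have a0: "\<alpha> \<noteq> 0" "\<beta> \<noteq> 0" using a b zR by auto
  then have aa: "\<alpha> \<bullet> \<alpha> > 0" "\<beta> \<bullet> \<beta> > 0" by auto
  define n1 where "n1 = 2 * (\<alpha> \<bullet> \<beta>) / (\<beta> \<bullet> \<beta>)"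
  define n2 where "n2 = 2 * (\<beta> \<bullet> \<alpha>) / (\<alpha> \<bullet> \<alpha>)"
  have r1: "\<alpha> - n1 *\<^sub>R \<beta> \<in> R" using rrefl[OF b a] by (simp add: n1_def)
  have r2: "\<beta> - n2 *\<^sub>R \<alpha> \<in> R" using rrefl[OF a b] by (simp add: n2_def)
  have i1: "n1 \<in> \<int>" using integ[OF b a] by (simp add: n1_def)
  have i2: "n2 \<in> \<int>" using integ[OF a b] by (simp add: n2_def)
  have p1: "n1 > 0" "n2 > 0" using ab aa by (auto simp: n1_def n2_def inner_commute)
  have strict: "\<bar>\<alpha> \<bullet> \<beta>\<bar> < norm \<alpha> * norm \<beta>"
  proof (rule ccontr)
    assume "\<not> ?thesis"
    then have "\<bar>\<alpha> \<bullet> \<beta>\<bar> = norm \<alpha> * norm \<beta>" using Cauchy_Schwarz_ineq2[of \<alpha> \<beta>] by linarith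
    then have "norm \<alpha> *\<^sub>R \<beta> = norm \<beta> *\<^sub>R \<alpha> \<or> norm \<alpha> *\<^sub>R \<beta> = - norm \<beta> *\<^sub>R \<alpha>"
      using norm_cauchy_schwarz_abs_eq by blast
    moreover have "\<beta> = (1 / norm \<alpha>) *\<^sub>R (norm \<alpha> *\<^sub>R \<beta>)" using a0 by simp
    ultimately obtain c where c: "\<beta> = c *\<^sub>R \<alpha>"
      by (metis scaleR_scaleR scaleR_minus_left)
    then have "c = 1 \<or> c = -1" using reduced[OF a] b by auto
    then show False
    proof
      assume "c = 1" then show False using c ne by simp
    next
      assume "c = -1" then have "\<alpha> \<bullet> \<beta> = - (\<alpha> \<bullet> \<alpha>)" using c by simp
      then show False using ab aa by simp
    qed
  qed
  have sq: "(\<alpha> \<bullet> \<beta>)^2 < (\<alpha> \<bullet> \<alpha>) * (\<beta> \<bullet> \<beta>)"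
  proof -
    have "(\<alpha> \<bullet> \<beta>)^2 = \<bar>\<alpha> \<bullet> \<beta>\<bar>^2" by simp
    also have "\<dots> < (norm \<alpha> * norm \<beta>)^2"
      using strict by (intro power_strict_mono) auto
    also have "\<dots> = (\<alpha> \<bullet> \<alpha>) * (\<beta> \<bullet> \<beta>)" by (simp add: power_mult_distrib power2_norm_eq_inner)
    finally show ?thesis .
  qed
  have prod: "n1 * n2 < 4"
  proof -
    have "n1 * n2 = 4 * (\<alpha> \<bullet> \<beta>)^2 / ((\<alpha> \<bullet> \<alpha>) * (\<beta> \<bullet> \<beta>))"
      by (simp add: n1_def n2_def inner_commute power2_eq_square field_simps)
    also have "\<dots> < 4" using sq aa by (simp add: divide_less_eq)
    finally show ?thesis .
  qed
  obtain k1 where k1: "n1 = of_int k1" using i1 Ints_cases by blast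
  obtain k2 where k2: "n2 = of_int k2" using i2 Ints_cases by blast
  have "k1 \<ge> 1" "k2 \<ge> 1" using p1 k1 k2 by auto
  moreover have "k1 * k2 < 4" using prod k1 k2 by (metis of_int_less_iff of_int_mult of_int_numeral)
  ultimately have "k1 = 1 \<or> k2 = 1"
  proof -
    assume h: "k1 \<ge> 1" "k2 \<ge> 1" "k1 * k2 < 4"
    show ?thesis
    proof (rule ccontr)
      assume "\<not> ?thesis"
      then have "k1 \<ge> 2" "k2 \<ge> 2" using h by auto
      then have "k1 * k2 \<ge> 2 * 2" by (intro mult_mono) auto
      then show False using h by simp
    qed
  qed
  then show ?thesis
  proof
    assume "k1 = 1" then show ?thesis using r1 k1 by simp
  next
    assume "k2 = 1" then have "\<beta> - \<alpha> \<in> R" using r2 k2 by simp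
    then show ?thesis using neg_root by fastforce
  qed
qed

lemma rootB:
  assumes "\<alpha> \<in> R" "\<beta> \<in> R" "\<alpha> \<bullet> \<beta> < 0" "\<alpha> \<noteq> - \<beta>"
  shows "\<alpha> + \<beta> \<in> R"
  using rootA[OF assms(1) neg_root[OF assms(2)]] assms(3,4) by simp

definition H1 where "H1 = (SOME H. \<forall>\<alpha>\<in>P. \<alpha> \<bullet> H = 1)"

lemma H1: "\<alpha> \<in> P \<Longrightarrow> \<alpha> \<bullet> H1 = 1"
  using someI_ex[OF exists_dual_vec[OF indP, of "\<lambda>_. 1"]] unfolding H1_def by blast

lemma nc_zero: "nat_comb P 0"
  unfolding nat_comb_def by (intro exI[of _ "\<lambda>_. 0"]) simp

lemma nc_add: "nat_comb P u \<Longrightarrow> nat_comb P v \<Longrightarrow> nat_comb P (u + v)"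
  unfolding nat_comb_def
proof -
  assume "\<exists>c. u = (\<Sum>\<alpha>\<in>P. of_nat (c \<alpha>) *\<^sub>R \<alpha>)" "\<exists>c. v = (\<Sum>\<alpha>\<in>P. of_nat (c \<alpha>) *\<^sub>R \<alpha>)"
  then obtain c1 c2 where "u = (\<Sum>\<alpha>\<in>P. of_nat (c1 \<alpha>) *\<^sub>R \<alpha>)" "v = (\<Sum>\<alpha>\<in>P. of_nat (c2 \<alpha>) *\<^sub>R \<alpha>)" by blast
  then show "\<exists>c. u + v = (\<Sum>\<alpha>\<in>P. of_nat (c \<alpha>) *\<^sub>R \<alpha>)"
    by (intro exI[of _ "\<lambda>x. c1 x + c2 x"]) (simp add: sum.distrib scaleR_add_left)
qed

lemma nc_simple: "\<alpha> \<in> P \<Longrightarrow> nat_comb P \<alpha>"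
  unfolding nat_comb_def
proof (intro exI[of _ "\<lambda>x. if x = \<alpha> then 1 else 0"])
  assume a: "\<alpha> \<in> P"
  have "(\<Sum>x\<in>P. of_nat (if x = \<alpha> then 1 else 0) *\<^sub>R x) = (\<Sum>x\<in>P. if x = \<alpha> then x else 0)"
    by (intro sum.cong) auto
  also have "\<dots> = \<alpha>" using a finP by (simp add: sum.delta')
  finally show "\<alpha> = (\<Sum>x\<in>P. of_nat (if x = \<alpha> then 1 else 0) *\<^sub>R x)" by simp
qed

lemma nc_ht: "nat_comb P v \<Longrightarrow> \<exists>c. v = (\<Sum>\<alpha>\<in>P. of_nat (c \<alpha>) *\<^sub>R \<alpha>) \<and> v \<bullet> H1 = real (\<Sum>\<alpha>\<in>P. c \<alpha>)"
proof -
  assume "nat_comb P v"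
  then obtain c where c: "v = (\<Sum>\<alpha>\<in>P. of_nat (c \<alpha>) *\<^sub>R \<alpha>)" unfolding nat_comb_def by blast
  then have "v \<bullet> H1 = (\<Sum>\<alpha>\<in>P. real (c \<alpha>) * (\<alpha> \<bullet> H1))" by (simp add: inner_sum_left)
  also have "\<dots> = (\<Sum>\<alpha>\<in>P. real (c \<alpha>))" by (intro sum.cong) (auto simp: H1)
  finally show ?thesis using c by auto
qed

lemma nc_ht_nonneg: "nat_comb P v \<Longrightarrow> v \<bullet> H1 \<ge> 0"
  by (metis nc_ht of_nat_0_le_iff)

lemma nc_ht_pos: "nat_comb P v \<Longrightarrow> v \<noteq> 0 \<Longrightarrow> v \<bullet> H1 \<ge> 1"
proof -
  assume "nat_comb P v" "v \<noteq> 0"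
  then obtain c where c: "v = (\<Sum>\<alpha>\<in>P. of_nat (c \<alpha>) *\<^sub>R \<alpha>)" "v \<bullet> H1 = real (\<Sum>\<alpha>\<in>P. c \<alpha>)"
    using nc_ht by blast
  have "(\<Sum>\<alpha>\<in>P. c \<alpha>) \<noteq> 0"
  proof
    assume "(\<Sum>\<alpha>\<in>P. c \<alpha>) = 0"
    then have "\<forall>\<alpha>\<in>P. c \<alpha> = 0" using finP by simp
    then have "v = 0" using c(1) by simp
    then show False using \<open>v \<noteq> 0\<close> by simp
  qed
  then have "(\<Sum>\<alpha>\<in>P. c \<alpha>) \<ge> 1" by simp
  then have "1 \<le> real (\<Sum>\<alpha>\<in>P. c \<alpha>)" by (metis of_nat_1 of_nat_le_iff)
  then show ?thesis using c(2) by linarith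
qed

lemma pos_R: "\<beta> \<in> pos_roots R P \<Longrightarrow> \<beta> \<in> R" and pos_nc: "\<beta> \<in> pos_roots R P \<Longrightarrow> nat_comb P \<beta>"
  unfolding pos_roots_def by auto

lemma pos_ht: "\<beta> \<in> pos_roots R P \<Longrightarrow> \<beta> \<bullet> H1 \<ge> 1"
  using nc_ht_pos pos_R pos_nc zR by blast

lemma pos_ne0: "\<beta> \<in> pos_roots R P \<Longrightarrow> \<beta> \<noteq> 0"
  using pos_R zR by blast

lemma P_pos: "\<alpha> \<in> P \<Longrightarrow> \<alpha> \<in> pos_roots R P"
  using PR nc_simple unfolding pos_roots_def by auto

lemma root_sign: "\<beta> \<in> R \<Longrightarrow> nat_comb P \<beta> \<or> nat_comb P (- \<beta>)"
proof -
  assume "\<beta> \<in> R"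
  then obtain c where c: "\<beta> = (\<Sum>\<alpha>\<in>P. of_int (c \<alpha>) *\<^sub>R \<alpha>)" "(\<forall>\<alpha>\<in>P. c \<alpha> \<ge> 0) \<or> (\<forall>\<alpha>\<in>P. c \<alpha> \<le> 0)"
    using sgn by blast
  from c(2) show ?thesis
  proof
    assume h: "\<forall>\<alpha>\<in>P. c \<alpha> \<ge> 0"
    have "\<beta> = (\<Sum>\<alpha>\<in>P. of_nat (nat (c \<alpha>)) *\<^sub>R \<alpha>)" unfolding c(1)
      using h by (intro sum.cong) auto
    then show ?thesis unfolding nat_comb_def by (intro disjI1 exI[of _ "\<lambda>\<alpha>. nat (c \<alpha>)"])
  next
    assume h: "\<forall>\<alpha>\<in>P. c \<alpha> \<le> 0"
    have "- \<beta> = (\<Sum>\<alpha>\<in>P. of_int (- c \<alpha>) *\<^sub>R \<alpha>)" unfolding c(1)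
      by (simp add: sum_negf[symmetric])
    also have "\<dots> = (\<Sum>\<alpha>\<in>P. of_nat (nat (- c \<alpha>)) *\<^sub>R \<alpha>)"
      using h by (intro sum.cong) auto
    finally show ?thesis unfolding nat_comb_def by (intro disjI2 exI[of _ "\<lambda>\<alpha>. nat (- c \<alpha>)"])
  qed
qed

lemma le_refl: "root_le P a a"
  unfolding root_le_def using nc_zero by simp

lemma le_trans: "root_le P a b \<Longrightarrow> root_le P b c \<Longrightarrow> root_le P a c"
  unfolding root_le_def using nc_add[of "c - b" "b - a"] by simp

lemma le_antisym: "root_le P a b \<Longrightarrow> root_le P b a \<Longrightarrow> a = b"
proof (rule ccontr)
  assume h: "root_le P a b" "root_le P b a" "a \<noteq> b"
  then have "(b - a) \<bullet> H1 \<ge> 1" using nc_ht_pos unfolding root_le_def by simp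
  moreover have "(a - b) \<bullet> H1 \<ge> 0" using h nc_ht_nonneg unfolding root_le_def by simp
  ultimately show False by (simp add: inner_diff_left)
qed

lemma simple_sub:
  assumes a: "\<alpha> \<in> P" and d: "\<delta> \<in> pos_roots R P" and ne: "\<delta> \<noteq> \<alpha>" and ip: "\<delta> \<bullet> \<alpha> > 0"
  shows "\<delta> - \<alpha> \<in> pos_roots R P"
proof -
  have r: "\<delta> - \<alpha> \<in> R" using rootA[OF pos_R[OF d] _ ip ne] a PR by auto
  from root_sign[OF r] show ?thesis
  proof
    assume "nat_comb P (\<delta> - \<alpha>)" then show ?thesis using r unfolding pos_roots_def by simp
  next
    assume "nat_comb P (- (\<delta> - \<alpha>))"
    then have "(\<alpha> - \<delta>) \<bullet> H1 \<ge> 1" using nc_ht_pos ne by simp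
    moreover have "\<delta> \<bullet> H1 \<ge> 1" using pos_ht[OF d] .
    moreover have "\<alpha> \<bullet> H1 = 1" using H1[OF a] .
    ultimately show ?thesis by (simp add: inner_diff_left)
  qed
qed

lemma simple_add:
  assumes a: "\<alpha> \<in> P" and g: "\<gamma> \<in> pos_roots R P" and ip: "\<gamma> \<bullet> \<alpha> < 0"
  shows "\<gamma> + \<alpha> \<in> pos_roots R P"
proof -
  have ne: "\<gamma> \<noteq> - \<alpha>"
  proof
    assume "\<gamma> = - \<alpha>"
    then have "\<gamma> \<bullet> H1 = -1" using H1[OF a] by simp
    then show False using pos_ht[OF g] by simp
  qed
  have "\<gamma> + \<alpha> \<in> R" using rootB[OF pos_R[OF g] _ ip ne] a PR by auto
  moreover have "nat_comb P (\<gamma> + \<alpha>)" using nc_add[OF pos_nc[OF g] nc_simple[OF a]] .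
  ultimately show ?thesis unfolding pos_roots_def by simp
qed

lemma pair_pos:
  assumes g: "\<gamma> \<in> pos_roots R P" and d: "\<delta> \<in> pos_roots R P" and ip: "\<gamma> \<bullet> \<delta> > 0" and ne: "\<gamma> \<noteq> \<delta>"
  shows "\<gamma> - \<delta> \<in> pos_roots R P \<or> \<delta> - \<gamma> \<in> pos_roots R P"
proof -
  have r: "\<gamma> - \<delta> \<in> R" using rootA[OF pos_R[OF g] pos_R[OF d] ip ne] .
  from root_sign[OF r] show ?thesis
  proof
    assume "nat_comb P (\<gamma> - \<delta>)" then show ?thesis using r unfolding pos_roots_def by simp
  next
    assume "nat_comb P (- (\<gamma> - \<delta>))"
    moreover have "\<delta> - \<gamma> \<in> R" using neg_root[OF r] by simp
    ultimately show ?thesis unfolding pos_roots_def by simp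
  qed
qed

end

lemma inner_sum_mset_left: "(sum_mset M) \<bullet> (y::'a::real_inner) = sum_mset (image_mset (\<lambda>x. x \<bullet> y) M)"
  by (induction M) (simp_all add: inner_add_left)

lemma sum_mset_nonpos_real: "(\<And>x. x \<in># M \<Longrightarrow> f x \<le> (0::real)) \<Longrightarrow> sum_mset (image_mset f M) \<le> 0"
  by (induction M) (auto intro: add_nonpos_nonpos)

lemma sum_mset_nonneg_real: "(\<And>x. x \<in># M \<Longrightarrow> f x \<ge> (0::real)) \<Longrightarrow> sum_mset (image_mset f M) \<ge> 0"
  by (induction M) auto

lemma sum_mset_ge_size: "(\<And>x. x \<in># M \<Longrightarrow> f x \<ge> (1::real)) \<Longrightarrow> sum_mset (image_mset f M) \<ge> real (size M)"
proof (induction M)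
  case empty then show ?case by simp
next
  case (add x M)
  then have "f x \<ge> 1" "sum_mset (image_mset f M) \<ge> real (size M)" by auto
  then show ?case by simp
qed

lemma sum_mset_eq_size: "(\<And>x. x \<in># M \<Longrightarrow> f x = (1::real)) \<Longrightarrow> sum_mset (image_mset f M) = real (size M)"
proof (induction M)
  case empty then show ?case by simp
next
  case (add x M)
  then have "f x = 1" "sum_mset (image_mset f M) = real (size M)" by auto
  then show ?case by simp
qed

lemma sum_mset_replicate_scaleR: "sum_mset (replicate_mset n (x::'a::real_vector)) = real n *\<^sub>R x"
  by (induction n) (simp_all add: algebra_simps)

lemma mset_of_comb:
  fixes A :: "'a::real_vector set" and c :: "'a \<Rightarrow> nat"
  assumes "finite A"
  shows "\<exists>M. set_mset M \<subseteq> A \<and> sum_mset M = (\<Sum>\<alpha>\<in>A. of_nat (c \<alpha>) *\<^sub>R \<alpha>)"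
  using assms
proof (induction A rule: finite_induct)
  case empty then show ?case by (intro exI[of _ "{#}"]) simp
next
  case (insert a A)
  then obtain M where M: "set_mset M \<subseteq> A" "sum_mset M = (\<Sum>\<alpha>\<in>A. of_nat (c \<alpha>) *\<^sub>R \<alpha>)" by blast
  show ?case
    by (intro exI[of _ "M + replicate_mset (c a) a"]) (use M insert.hyps in \<open>auto simp: sum_mset_replicate_scaleR\<close>)
qed

context rsb
begin

lemma nc_mset: "nat_comb P v \<Longrightarrow> \<exists>M. set_mset M \<subseteq> P \<and> sum_mset M = v"
  using mset_of_comb[OF finP] unfolding nat_comb_def by metis

lemma ht_mset_pos: "set_mset M \<subseteq> pos_roots R P \<Longrightarrow> (sum_mset M) \<bullet> H1 \<ge> real (size M)"
  unfolding inner_sum_mset_left by (rule sum_mset_ge_size) (use pos_ht in auto)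

lemma ht_mset_P: "set_mset M \<subseteq> P \<Longrightarrow> (sum_mset M) \<bullet> H1 = real (size M)"
  unfolding inner_sum_mset_left by (rule sum_mset_eq_size) (use H1 in auto)

lemma pair_exists:
  assumes ne: "MA \<noteq> {#}" and sA: "set_mset MA \<subseteq> pos_roots R P" and eq: "sum_mset MB = sum_mset MA"
  shows "\<exists>\<gamma>\<in>#MA. \<exists>\<delta>\<in>#MB. \<gamma> \<bullet> \<delta> > 0"
proof (rule ccontr)
  assume "\<not> ?thesis"
  then have np: "\<gamma> \<bullet> \<delta> \<le> 0" if "\<gamma> \<in># MA" "\<delta> \<in># MB" for \<gamma> \<delta> using that by force
  define X where "X = sum_mset MA"
  have "X \<bullet> H1 \<ge> real (size MA)" unfolding X_def using ht_mset_pos[OF sA] .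
  moreover have "size MA \<ge> 1" using ne by (simp add: Suc_le_eq nonempty_has_size)
  ultimately have "X \<noteq> 0" by auto
  then have "X \<bullet> X > 0" by simp
  moreover have "X \<bullet> X \<le> 0"
  proof -
    have "X \<bullet> X = sum_mset MB \<bullet> X" using eq X_def by simp
    also have "\<dots> = sum_mset (image_mset (\<lambda>\<delta>. \<delta> \<bullet> X) MB)" by (rule inner_sum_mset_left)
    also have "\<dots> \<le> 0"
    proof (rule sum_mset_nonpos_real)
      fix \<delta> assume d: "\<delta> \<in># MB"
      have "\<delta> \<bullet> X = X \<bullet> \<delta>" by (simp add: inner_commute)
      also have "\<dots> = sum_mset (image_mset (\<lambda>\<gamma>. \<gamma> \<bullet> \<delta>) MA)" unfolding X_def by (rule inner_sum_mset_left)
      also have "\<dots> \<le> 0" by (rule sum_mset_nonpos_real) (use np d in auto)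
      finally show "\<delta> \<bullet> X \<le> 0" .
    qed
    finally show ?thesis .
  qed
  ultimately show False using inner_gt_zero_iff[of X] by linarith
qed

end

lemma mem_size: "x \<in># M \<Longrightarrow> 1 \<le> size M"
  using multi_member_split by fastforce

locale dctx = rsb +
  fixes U L :: "'a set"
  assumes U_pos: "U \<subseteq> pos_roots R P" and L_pos: "L \<subseteq> pos_roots R P"
    and upper: "\<And>\<beta> \<beta>'. \<beta> \<in> U \<Longrightarrow> \<beta>' \<in> pos_roots R P \<Longrightarrow> root_le P \<beta> \<beta>' \<Longrightarrow> \<beta>' \<in> U"
    and lower: "\<And>\<beta> \<beta>'. \<beta> \<in> L \<Longrightarrow> \<beta>' \<in> pos_roots R P \<Longrightarrow> root_le P \<beta>' \<beta> \<Longrightarrow> \<beta>' \<in> L"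
    and anti: "\<And>\<gamma> \<delta>. \<gamma> \<in> U \<Longrightarrow> \<delta> \<in> L \<Longrightarrow> root_le P \<gamma> \<delta> \<Longrightarrow> \<gamma> = \<delta>"
begin

definition cfg where
  "cfg MA MB MV \<longleftrightarrow> set_mset MA \<subseteq> U \<and> set_mset MB \<subseteq> L \<and> set_mset MV \<subseteq> P \<and>
     sum_mset MB = sum_mset MA + sum_mset MV \<and> size MB \<le> size MA"

definition bad where
  "bad MA MB MV \<longleftrightarrow> cfg MA MB MV \<and> \<not> (MV = {#} \<and> size MB = size MA)"

definition smaller where
  "smaller MA' MB' MV' MA MB MV \<longleftrightarrow> bad MA' MB' MV' \<and>
     (size MA' + size MB' < size MA + size MB \<or>
      (size MA' + size MB' = size MA + size MB \<and> size MV' < size MV))"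

lemma MA_ne: "bad MA MB MV \<Longrightarrow> MA \<noteq> {#}"
proof
  assume b: "bad MA MB MV" and e: "MA = {#}"
  then have "MB = {#}" unfolding bad_def cfg_def by auto
  then have "sum_mset MV = 0" using b e unfolding bad_def cfg_def by auto
  then have "real (size MV) = 0" using ht_mset_P[of MV] b unfolding bad_def cfg_def by auto
  then have "MV = {#}" by simp
  then show False using b e \<open>MB = {#}\<close> unfolding bad_def by simp
qed

lemma PM:
  assumes c: "cfg MA MB MV" and g: "\<gamma> \<in># MA" and d: "\<delta> \<in># MB" and S: "S \<subseteq># MV"
    and eta: "\<eta> \<in> pos_roots R P" "\<gamma> + sum_mset S - \<delta> = \<eta>"
  shows "\<exists>MA' MB' MV'. smaller MA' MB' MV' MA MB MV"
proof -
  have sA: "set_mset MA \<subseteq> U" and sB: "set_mset MB \<subseteq> L" and sV: "set_mset MV \<subseteq> P"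
    and sm: "sum_mset MB = sum_mset MA + sum_mset MV" and sz: "size MB \<le> size MA"
    using c unfolding cfg_def by auto
  have eA: "sum_mset MA = \<gamma> + sum_mset (MA - {#\<gamma>#})" using sum_mset.remove[OF g] .
  have eB: "sum_mset MB = \<delta> + sum_mset (MB - {#\<delta>#})" using sum_mset.remove[OF d] .
  have eV: "sum_mset MV = sum_mset S + sum_mset (MV - S)"
    using S by (metis subset_mset.add_diff_inverse sum_mset.union)
  have A': "sum_mset (MA - {#\<gamma>#}) = sum_mset MA - \<gamma>" using eA by (simp add: algebra_simps)
  have B': "sum_mset (MB - {#\<delta>#}) = sum_mset MB - \<delta>" using eB by (simp add: algebra_simps)
  have V': "sum_mset (MV - S) = sum_mset MV - sum_mset S" using eV by (simp add: algebra_simps)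
  have szB: "size (MB - {#\<delta>#}) = size MB - 1" "size MB \<ge> 1"
    using d mem_size[OF d] by (auto simp: size_Diff_singleton)
  have szA: "size (MA - {#\<gamma>#}) = size MA - 1" "size MA \<ge> 1"
    using g mem_size[OF g] by (auto simp: size_Diff_singleton)
  show ?thesis
  proof (cases "\<eta> \<in> U")
    case True
    define MA' where "MA' = MA - {#\<gamma>#} + {#\<eta>#}"
    define MB' where "MB' = MB - {#\<delta>#}"
    define MV' where "MV' = MV - S"
    have "cfg MA' MB' MV'"
      unfolding cfg_def
    proof (intro conjI)
      show "set_mset MA' \<subseteq> U" using sA True by (auto simp: MA'_def dest: in_diffD)
      show "set_mset MB' \<subseteq> L" using sB by (auto simp: MB'_def dest: in_diffD)
      show "set_mset MV' \<subseteq> P" using sV by (auto simp: MV'_def dest: in_diffD)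
      show "sum_mset MB' = sum_mset MA' + sum_mset MV'"
        using sm by (simp add: MA'_def MB'_def MV'_def A' B' V' eta(2)[symmetric] algebra_simps)
      show "size MB' \<le> size MA'" using sz szA szB by (simp add: MA'_def MB'_def)
    qed
    moreover have "size MB' < size MA'" using sz szA szB by (simp add: MA'_def MB'_def)
    ultimately have "bad MA' MB' MV'" unfolding bad_def by simp
    moreover have "size MA' + size MB' < size MA + size MB" using szA szB by (simp add: MA'_def MB'_def)
    ultimately show ?thesis unfolding smaller_def by blast
  next
    case False
    obtain M where M: "set_mset M \<subseteq> P" "sum_mset M = \<eta>" using nc_mset pos_nc[OF eta(1)] by blast
    have "M \<noteq> {#}" using M pos_ne0[OF eta(1)] by auto
    define MA' where "MA' = MA - {#\<gamma>#}"
    define MB' where "MB' = MB - {#\<delta>#}"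
    define MV' where "MV' = MV - S + M"
    have "cfg MA' MB' MV'"
      unfolding cfg_def
    proof (intro conjI)
      show "set_mset MA' \<subseteq> U" using sA by (auto simp: MA'_def dest: in_diffD)
      show "set_mset MB' \<subseteq> L" using sB by (auto simp: MB'_def dest: in_diffD)
      show "set_mset MV' \<subseteq> P" using sV M by (auto simp: MV'_def dest: in_diffD)
      show "sum_mset MB' = sum_mset MA' + sum_mset MV'"
        using sm M(2) by (simp add: MA'_def MB'_def MV'_def A' B' V' eta(2)[symmetric] algebra_simps)
      show "size MB' \<le> size MA'" using sz szA szB by (simp add: MA'_def MB'_def)
    qed
    moreover have "MV' \<noteq> {#}" using \<open>M \<noteq> {#}\<close> by (simp add: MV'_def)
    ultimately have "bad MA' MB' MV'" unfolding bad_def by simp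
    moreover have "size MA' + size MB' < size MA + size MB" using szA szB by (simp add: MA'_def MB'_def)
    ultimately show ?thesis unfolding smaller_def by blast
  qed
qed

lemma PM0:
  assumes c: "cfg MA MB MV" and g: "\<gamma> \<in># MA" and d: "\<delta> \<in># MB" and eq: "\<gamma> = \<delta>"
    and h: "MV \<noteq> {#} \<or> size MB < size MA"
  shows "\<exists>MA' MB' MV'. smaller MA' MB' MV' MA MB MV"
proof -
  have sA: "set_mset MA \<subseteq> U" and sB: "set_mset MB \<subseteq> L" and sV: "set_mset MV \<subseteq> P"
    and sm: "sum_mset MB = sum_mset MA + sum_mset MV" and sz: "size MB \<le> size MA"
    using c unfolding cfg_def by auto
  have eA: "sum_mset MA = \<gamma> + sum_mset (MA - {#\<gamma>#})" using sum_mset.remove[OF g] .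
  have eB: "sum_mset MB = \<delta> + sum_mset (MB - {#\<delta>#})" using sum_mset.remove[OF d] .
  have szB: "size (MB - {#\<delta>#}) = size MB - 1" "size MB \<ge> 1"
    using d mem_size[OF d] by (auto simp: size_Diff_singleton)
  have szA: "size (MA - {#\<gamma>#}) = size MA - 1" "size MA \<ge> 1"
    using g mem_size[OF g] by (auto simp: size_Diff_singleton)
  define MA' where "MA' = MA - {#\<gamma>#}"
  define MB' where "MB' = MB - {#\<delta>#}"
  have "cfg MA' MB' MV"
    unfolding cfg_def
  proof (intro conjI)
    show "set_mset MA' \<subseteq> U" using sA by (auto simp: MA'_def dest: in_diffD)
    show "set_mset MB' \<subseteq> L" using sB by (auto simp: MB'_def dest: in_diffD)
    show "set_mset MV \<subseteq> P" using sV .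
    show "sum_mset MB' = sum_mset MA' + sum_mset MV"
      using sm eA eB eq by (simp add: MA'_def MB'_def algebra_simps)
    show "size MB' \<le> size MA'" using sz szA szB by (simp add: MA'_def MB'_def)
  qed
  moreover have "MV \<noteq> {#} \<or> size MB' < size MA'" using h szA szB by (auto simp: MA'_def MB'_def)
  ultimately have "bad MA' MB' MV" unfolding bad_def by auto
  moreover have "size MA' + size MB' < size MA + size MB" using szA szB by (simp add: MA'_def MB'_def)
  ultimately show ?thesis unfolding smaller_def by blast
qed

lemma pair_step:
  assumes c: "cfg MA MB MV" and g: "\<gamma> \<in># MA" and d: "\<delta> \<in># MB" and ip: "\<gamma> \<bullet> \<delta> > 0"
    and h: "MV \<noteq> {#} \<or> size MB < size MA"
  shows "\<exists>MA' MB' MV'. smaller MA' MB' MV' MA MB MV"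
proof (cases "\<gamma> = \<delta>")
  case True
  show ?thesis by (rule PM0[OF c g d True h])
next
  case False
  have gU: "\<gamma> \<in> U" and dL: "\<delta> \<in> L" using c g d unfolding cfg_def by auto
  then have gp: "\<gamma> \<in> pos_roots R P" and dp: "\<delta> \<in> pos_roots R P" using U_pos L_pos by auto
  from pair_pos[OF gp dp ip False] show ?thesis
  proof
    assume "\<gamma> - \<delta> \<in> pos_roots R P"
    then show ?thesis using PM[OF c g d _ _, of "{#}" "\<gamma> - \<delta>"] by simp
  next
    assume "\<delta> - \<gamma> \<in> pos_roots R P"
    then have "root_le P \<gamma> \<delta>" unfolding root_le_def pos_roots_def by simp
    then have "\<gamma> = \<delta>" using anti gU dL by blast
    then show ?thesis using False by simp
  qed
qed

lemma v_analysis: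
  assumes c: "cfg MA MB MV" and ne: "MV \<noteq> {#}"
  shows "\<exists>\<alpha>\<in>#MV. \<alpha> \<in># MB \<or> (\<exists>\<delta>\<in>#MB. \<delta> - \<alpha> \<in> pos_roots R P) \<or> (\<exists>\<gamma>\<in>#MA. \<gamma> + \<alpha> \<in> pos_roots R P)"
proof (rule ccontr)
  assume nh: "\<not> ?thesis"
  have sA: "set_mset MA \<subseteq> U" and sB: "set_mset MB \<subseteq> L" and sV: "set_mset MV \<subseteq> P"
    and sm: "sum_mset MB = sum_mset MA + sum_mset MV"
    using c unfolding cfg_def by auto
  have h1: "\<delta> \<bullet> \<alpha> \<le> 0" if a: "\<alpha> \<in># MV" and d: "\<delta> \<in># MB" for \<alpha> \<delta>
  proof (rule ccontr)
    assume "\<not> \<delta> \<bullet> \<alpha> \<le> 0"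
    then have ip: "\<delta> \<bullet> \<alpha> > 0" by simp
    have aP: "\<alpha> \<in> P" using a sV by auto
    have dp: "\<delta> \<in> pos_roots R P" using d sB L_pos by auto
    have "\<delta> \<noteq> \<alpha>" using nh a d by auto
    then have "\<delta> - \<alpha> \<in> pos_roots R P" using simple_sub[OF aP dp _ ip] by simp
    then show False using nh a d by auto
  qed
  have h2: "\<gamma> \<bullet> \<alpha> \<ge> 0" if a: "\<alpha> \<in># MV" and g: "\<gamma> \<in># MA" for \<alpha> \<gamma>
  proof (rule ccontr)
    assume "\<not> \<gamma> \<bullet> \<alpha> \<ge> 0"
    then have ip: "\<gamma> \<bullet> \<alpha> < 0" by simp
    have aP: "\<alpha> \<in> P" using a sV by auto
    have gp: "\<gamma> \<in> pos_roots R P" using g sA U_pos by auto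
    have "\<gamma> + \<alpha> \<in> pos_roots R P" using simple_add[OF aP gp ip] .
    then show False using nh a g by auto
  qed
  define v where "v = sum_mset MV"
  have vB: "sum_mset MB \<bullet> v \<le> 0"
    unfolding inner_sum_mset_left
  proof (rule sum_mset_nonpos_real)
    fix \<delta> assume d: "\<delta> \<in># MB"
    have "\<delta> \<bullet> v = sum_mset (image_mset (\<lambda>\<alpha>. \<alpha> \<bullet> \<delta>) MV)"
      unfolding v_def by (simp add: inner_commute[of \<delta>] inner_sum_mset_left)
    also have "\<dots> \<le> 0" by (rule sum_mset_nonpos_real) (use h1 d in \<open>auto simp: inner_commute\<close>)
    finally show "\<delta> \<bullet> v \<le> 0" .
  qed
  have vA: "sum_mset MA \<bullet> v \<ge> 0"
    unfolding inner_sum_mset_left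
  proof (rule sum_mset_nonneg_real)
    fix \<gamma> assume g: "\<gamma> \<in># MA"
    have "\<gamma> \<bullet> v = sum_mset (image_mset (\<lambda>\<alpha>. \<alpha> \<bullet> \<gamma>) MV)"
      unfolding v_def by (simp add: inner_commute[of \<gamma>] inner_sum_mset_left)
    also have "\<dots> \<ge> 0" by (rule sum_mset_nonneg_real) (use h2 g in \<open>auto simp: inner_commute\<close>)
    finally show "\<gamma> \<bullet> v \<ge> 0" .
  qed
  have "v = sum_mset MB - sum_mset MA" using sm v_def by simp
  then have "v \<bullet> v = sum_mset MB \<bullet> v - sum_mset MA \<bullet> v" by (simp add: inner_diff_left)
  then have "v \<bullet> v \<le> 0" using vA vB by simp
  then have "v = 0" by (metis inner_gt_zero_iff not_le)
  moreover have "v \<bullet> H1 = real (size MV)" unfolding v_def using ht_mset_P[OF sV] .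
  moreover have "size MV \<ge> 1" using ne by (metis multiset_nonemptyE mem_size)
  ultimately show False by simp
qed

lemma reduce:
  assumes b: "bad MA MB MV"
  shows "\<exists>MA' MB' MV'. smaller MA' MB' MV' MA MB MV"
proof -
  have c: "cfg MA MB MV" using b unfolding bad_def by simp
  have sA: "set_mset MA \<subseteq> U" and sB: "set_mset MB \<subseteq> L" and sV: "set_mset MV \<subseteq> P"
    and sm: "sum_mset MB = sum_mset MA + sum_mset MV" and sz: "size MB \<le> size MA"
    using c unfolding cfg_def by auto
  have neA: "MA \<noteq> {#}" using MA_ne[OF b] .
  have sAp: "set_mset MA \<subseteq> pos_roots R P" using sA U_pos by auto
  show ?thesis
  proof (cases "MV = {#}")
    case True
    then have lt: "size MB < size MA" using b sz unfolding bad_def by auto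
    have "sum_mset MB = sum_mset MA" using sm True by simp
    then obtain \<gamma> \<delta> where gd: "\<gamma> \<in># MA" "\<delta> \<in># MB" "\<gamma> \<bullet> \<delta> > 0" using pair_exists[OF neA sAp] by blast
    show ?thesis using pair_step[OF c gd] lt by blast
  next
    case False
    note neV = False
    obtain \<alpha> where a: "\<alpha> \<in># MV" and
      alt: "\<alpha> \<in># MB \<or> (\<exists>\<delta>\<in>#MB. \<delta> - \<alpha> \<in> pos_roots R P) \<or> (\<exists>\<gamma>\<in>#MA. \<gamma> + \<alpha> \<in> pos_roots R P)"
      using v_analysis[OF c False] by blast
    have aP: "\<alpha> \<in> P" using a sV by auto
    have ap: "\<alpha> \<in> pos_roots R P" using P_pos[OF aP] .
    have a0: "\<alpha> \<noteq> 0" using pos_ne0[OF ap] .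
    have Sa: "{#\<alpha>#} \<subseteq># MV" using a by simp
    have eV: "sum_mset MV = \<alpha> + sum_mset (MV - {#\<alpha>#})" using sum_mset.remove[OF a] .
    have szV: "size (MV - {#\<alpha>#}) < size MV" using size_Diff1_less[OF a] .
    from alt consider (M1') "\<alpha> \<in># MB" | (M1) \<delta>0 where "\<delta>0 \<in># MB" "\<delta>0 - \<alpha> \<in> pos_roots R P"
      | (M2) \<gamma>0 where "\<gamma>0 \<in># MA" "\<gamma>0 + \<alpha> \<in> pos_roots R P" by blast
    then show ?thesis
    proof cases
      case M1'
      define MB' where "MB' = MB - {#\<alpha>#}"
      define MV' where "MV' = MV - {#\<alpha>#}"
      have eB: "sum_mset MB = \<alpha> + sum_mset MB'" unfolding MB'_def using sum_mset.remove[OF M1'] .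
      have szB: "size MB' = size MB - 1" "size MB \<ge> 1"
        using M1' mem_size[OF M1'] by (auto simp: MB'_def size_Diff_singleton)
      have "cfg MA MB' MV'" unfolding cfg_def
      proof (intro conjI)
        show "set_mset MA \<subseteq> U" using sA .
        show "set_mset MB' \<subseteq> L" using sB by (auto simp: MB'_def dest: in_diffD)
        show "set_mset MV' \<subseteq> P" using sV by (auto simp: MV'_def dest: in_diffD)
        show "sum_mset MB' = sum_mset MA + sum_mset MV'" using sm eB eV
          by (simp add: MV'_def algebra_simps)
        show "size MB' \<le> size MA" using szB sz by simp
      qed
      moreover have "size MB' < size MA" using szB sz by simp
      ultimately have "bad MA MB' MV'" unfolding bad_def by simp
      moreover have "size MA + size MB' < size MA + size MB" using szB by simp
      ultimately show ?thesis unfolding smaller_def by blast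
    next
      case M1
      have d0: "\<delta>0 \<in># MB" and d0p: "\<delta>0 - \<alpha> \<in> pos_roots R P" using M1 by auto
      have d0L: "\<delta>0 \<in> L" using d0 sB by auto
      have le1: "root_le P (\<delta>0 - \<alpha>) \<delta>0" unfolding root_le_def using nc_simple[OF aP] by simp
      have dL: "\<delta>0 - \<alpha> \<in> L" using lower[OF d0L d0p le1] .
      define MB1 where "MB1 = MB - {#\<delta>0#} + {#\<delta>0 - \<alpha>#}"
      define MV1 where "MV1 = MV - {#\<alpha>#}"
      have eB: "sum_mset MB = \<delta>0 + sum_mset (MB - {#\<delta>0#})" using sum_mset.remove[OF d0] .
      have szB: "size MB1 = size MB"
        using d0 mem_size[OF d0] by (auto simp: MB1_def size_Diff_singleton)
      have c1: "cfg MA MB1 MV1" unfolding cfg_def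
      proof (intro conjI)
        show "set_mset MA \<subseteq> U" using sA .
        show "set_mset MB1 \<subseteq> L" using sB dL by (auto simp: MB1_def dest: in_diffD)
        show "set_mset MV1 \<subseteq> P" using sV by (auto simp: MV1_def dest: in_diffD)
        show "sum_mset MB1 = sum_mset MA + sum_mset MV1" using sm eB eV
          by (simp add: MB1_def MV1_def algebra_simps)
        show "size MB1 \<le> size MA" using szB sz by simp
      qed
      show ?thesis
      proof (cases "bad MA MB1 MV1")
        case True
        moreover have "size MV1 < size MV" using szV by (simp add: MV1_def)
        ultimately show ?thesis unfolding smaller_def using szB
          by (intro exI[of _ MA] exI[of _ MB1] exI[of _ MV1]) auto
      next
        case False
        then have V1: "MV1 = {#}" using c1 unfolding bad_def by simp
        have "sum_mset MB1 = sum_mset MA" using c1 V1 unfolding cfg_def by simp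
        then obtain \<gamma> \<delta> where g: "\<gamma> \<in># MA" and d: "\<delta> \<in># MB1" and ip: "\<gamma> \<bullet> \<delta> > 0"
          using pair_exists[OF neA sAp] by blast
        have gU: "\<gamma> \<in> U" using g sA by auto
        have gp: "\<gamma> \<in> pos_roots R P" using gU U_pos by auto
        from d have "\<delta> \<in># MB - {#\<delta>0#} \<or> \<delta> = \<delta>0 - \<alpha>" by (auto simp: MB1_def)
        then show ?thesis
        proof
          assume "\<delta> \<in># MB - {#\<delta>0#}"
          then have "\<delta> \<in># MB" by (rule in_diffD)
          then show ?thesis using pair_step[OF c g _ ip] neV by blast
        next
          assume de: "\<delta> = \<delta>0 - \<alpha>"
          show ?thesis
          proof (cases "\<gamma> = \<delta>0 - \<alpha>")
            case True
            then have "root_le P \<gamma> \<delta>0" using le1 by simp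
            then have "\<gamma> = \<delta>0" using anti[OF gU d0L] by simp
            then show ?thesis using True a0 by simp
          next
            case False
            from pair_pos[OF gp d0p _ False] ip de
            have "\<gamma> - (\<delta>0 - \<alpha>) \<in> pos_roots R P \<or> (\<delta>0 - \<alpha>) - \<gamma> \<in> pos_roots R P" by simp
            then show ?thesis
            proof
              assume h: "\<gamma> - (\<delta>0 - \<alpha>) \<in> pos_roots R P"
              have "\<gamma> + sum_mset {#\<alpha>#} - \<delta>0 = \<gamma> - (\<delta>0 - \<alpha>)" by (simp add: algebra_simps)
              then show ?thesis using PM[OF c g d0 Sa h] by simp
            next
              assume "(\<delta>0 - \<alpha>) - \<gamma> \<in> pos_roots R P"
              then have "root_le P \<gamma> (\<delta>0 - \<alpha>)" unfolding root_le_def pos_roots_def by simp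
              then have "\<gamma> = \<delta>0 - \<alpha>" using anti[OF gU dL] by simp
              then show ?thesis using False by simp
            qed
          qed
        qed
      qed
    next
      case M2
      have g0: "\<gamma>0 \<in># MA" and g0p: "\<gamma>0 + \<alpha> \<in> pos_roots R P" using M2 by auto
      have g0U: "\<gamma>0 \<in> U" using g0 sA by auto
      have le1: "root_le P \<gamma>0 (\<gamma>0 + \<alpha>)" unfolding root_le_def using nc_simple[OF aP] by simp
      have gU': "\<gamma>0 + \<alpha> \<in> U" using upper[OF g0U g0p le1] .
      define MA2 where "MA2 = MA - {#\<gamma>0#} + {#\<gamma>0 + \<alpha>#}"
      define MV2 where "MV2 = MV - {#\<alpha>#}"
      have eA: "sum_mset MA = \<gamma>0 + sum_mset (MA - {#\<gamma>0#})" using sum_mset.remove[OF g0] .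
      have szA: "size MA2 = size MA"
        using g0 mem_size[OF g0] by (auto simp: MA2_def size_Diff_singleton)
      have c2: "cfg MA2 MB MV2" unfolding cfg_def
      proof (intro conjI)
        show "set_mset MA2 \<subseteq> U" using sA gU' by (auto simp: MA2_def dest: in_diffD)
        show "set_mset MB \<subseteq> L" using sB .
        show "set_mset MV2 \<subseteq> P" using sV by (auto simp: MV2_def dest: in_diffD)
        show "sum_mset MB = sum_mset MA2 + sum_mset MV2" using sm eA eV
          by (simp add: MA2_def MV2_def algebra_simps)
        show "size MB \<le> size MA2" using szA sz by simp
      qed
      show ?thesis
      proof (cases "bad MA2 MB MV2")
        case True
        moreover have "size MV2 < size MV" using szV by (simp add: MV2_def)
        ultimately show ?thesis unfolding smaller_def using szA
          by (intro exI[of _ MA2] exI[of _ MB] exI[of _ MV2]) auto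
      next
        case False
        then have V2: "MV2 = {#}" using c2 unfolding bad_def by simp
        have eq2: "sum_mset MB = sum_mset MA2" using c2 V2 unfolding cfg_def by simp
        have neA2: "MA2 \<noteq> {#}" by (simp add: MA2_def)
        have sA2p: "set_mset MA2 \<subseteq> pos_roots R P" using c2 U_pos unfolding cfg_def by auto
        obtain \<gamma> \<delta> where g: "\<gamma> \<in># MA2" and d: "\<delta> \<in># MB" and ip: "\<gamma> \<bullet> \<delta> > 0"
          using pair_exists[OF neA2 sA2p eq2] by blast
        have dL: "\<delta> \<in> L" using d sB by auto
        have dp: "\<delta> \<in> pos_roots R P" using dL L_pos by auto
        from g have "\<gamma> \<in># MA - {#\<gamma>0#} \<or> \<gamma> = \<gamma>0 + \<alpha>" by (auto simp: MA2_def)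
        then show ?thesis
        proof
          assume "\<gamma> \<in># MA - {#\<gamma>0#}"
          then have "\<gamma> \<in># MA" by (rule in_diffD)
          then show ?thesis using pair_step[OF c _ d ip] neV by blast
        next
          assume ge: "\<gamma> = \<gamma>0 + \<alpha>"
          show ?thesis
          proof (cases "\<gamma>0 + \<alpha> = \<delta>")
            case True
            then have "root_le P \<gamma>0 \<delta>" using le1 by simp
            then have "\<gamma>0 = \<delta>" using anti[OF g0U dL] by simp
            then show ?thesis using True a0 by simp
          next
            case False
            from pair_pos[OF g0p dp _ False] ip ge
            have "(\<gamma>0 + \<alpha>) - \<delta> \<in> pos_roots R P \<or> \<delta> - (\<gamma>0 + \<alpha>) \<in> pos_roots R P" by simp
            then show ?thesis
            proof
              assume h: "(\<gamma>0 + \<alpha>) - \<delta> \<in> pos_roots R P"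
              have "\<gamma>0 + sum_mset {#\<alpha>#} - \<delta> = (\<gamma>0 + \<alpha>) - \<delta>" by simp
              then show ?thesis using PM[OF c g0 d Sa h] by simp
            next
              assume "\<delta> - (\<gamma>0 + \<alpha>) \<in> pos_roots R P"
              then have "root_le P (\<gamma>0 + \<alpha>) \<delta>" unfolding root_le_def pos_roots_def by simp
              then have "\<gamma>0 + \<alpha> = \<delta>" using anti[OF gU' dL] by simp
              then show ?thesis using False by simp
            qed
          qed
        qed
      qed
    qed
  qed
qed

lemma no_bad: "\<not> bad MA MB MV"
proof -
  have "\<forall>MA MB MV. size MA + size MB = n \<longrightarrow> size MV = k \<longrightarrow> \<not> bad MA MB MV" for n k
  proof (induction n arbitrary: k rule: less_induct)
    case (less n)
    note outer = less.IH
    show ?case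
    proof (induction k rule: less_induct)
      case (less k)
      show ?case
      proof (intro allI impI notI)
        fix MA MB MV assume h: "size MA + size MB = n" "size MV = k" "bad MA MB MV"
        obtain MA' MB' MV' where sm: "smaller MA' MB' MV' MA MB MV" using reduce[OF h(3)] by blast
        then have b': "bad MA' MB' MV'" unfolding smaller_def by simp
        from sm consider "size MA' + size MB' < n" | "size MA' + size MB' = n" "size MV' < k"
          unfolding smaller_def using h by auto
        then show False
        proof cases
          case 1 then show False using outer[OF 1] b' by blast
        next
          case 2 then show False using less.IH[OF 2(2)] b' by blast
        qed
      qed
    qed
  qed
  then show ?thesis by blast
qed

end

lemma rep_mset:
  fixes A :: "'a::real_vector set" and n :: "'a \<Rightarrow> nat"
  assumes "finite A"
  shows "set_mset (\<Sum>x\<in>A. replicate_mset (n x) x) \<subseteq> A \<and>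
         sum_mset (\<Sum>x\<in>A. replicate_mset (n x) x) = (\<Sum>x\<in>A. real (n x) *\<^sub>R x) \<and>
         size (\<Sum>x\<in>A. replicate_mset (n x) x) = (\<Sum>x\<in>A. n x)"
  using assms
proof (induction A rule: finite_induct)
  case empty then show ?case by simp
next
  case (insert a A)
  then show ?case by (auto simp: sum_mset_replicate_scaleR)
qed

lemma sum_Inl_Inr:
  fixes f :: "'a + 'b \<Rightarrow> real"
  assumes "finite A" "finite B"
  shows "(\<Sum>i\<in>Inl ` A \<union> Inr ` B. f i) = (\<Sum>x\<in>A. f (Inl x)) + (\<Sum>y\<in>B. f (Inr y))"
proof -
  have "(\<Sum>i\<in>Inl ` A \<union> Inr ` B. f i) = (\<Sum>i\<in>Inl ` A. f i) + (\<Sum>i\<in>Inr ` B. f i)"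
    using assms by (intro sum.union_disjoint) auto
  also have "\<dots> = (\<Sum>x\<in>A. f (Inl x)) + (\<Sum>y\<in>B. f (Inr y))"
    by (simp add: sum.reindex)
  finally show ?thesis .
qed

context rsb
begin

definition cf where "cf \<beta> = (SOME c. \<beta> = (\<Sum>\<alpha>\<in>P. of_nat (c \<alpha>) *\<^sub>R \<alpha>))"

lemma cf: assumes "nat_comb P \<beta>" shows "\<beta> = (\<Sum>\<alpha>\<in>P. real (cf \<beta> \<alpha>) *\<^sub>R \<alpha>)"
proof -
  obtain c where "\<beta> = (\<Sum>\<alpha>\<in>P. real (c \<alpha>) *\<^sub>R \<alpha>)" using assms unfolding nat_comb_def by blast
  then show ?thesis unfolding cf_def by (rule someI[where P="\<lambda>c. \<beta> = (\<Sum>\<alpha>\<in>P. real (c \<alpha>) *\<^sub>R \<alpha>)"])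
qed

lemma vec_coord:
  assumes "finite G" "G \<subseteq> pos_roots R P"
  shows "(\<Sum>\<gamma>\<in>G. w \<gamma> *\<^sub>R \<gamma>) = (\<Sum>\<alpha>\<in>P. (\<Sum>\<gamma>\<in>G. w \<gamma> * real (cf \<gamma> \<alpha>)) *\<^sub>R \<alpha>)"
proof -
  have "(\<Sum>\<gamma>\<in>G. w \<gamma> *\<^sub>R \<gamma>) = (\<Sum>\<gamma>\<in>G. w \<gamma> *\<^sub>R (\<Sum>\<alpha>\<in>P. real (cf \<gamma> \<alpha>) *\<^sub>R \<alpha>))"
    using assms(2) cf pos_nc by (intro sum.cong) auto
  also have "\<dots> = (\<Sum>\<gamma>\<in>G. \<Sum>\<alpha>\<in>P. (w \<gamma> * real (cf \<gamma> \<alpha>)) *\<^sub>R \<alpha>)"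
    by (simp add: scaleR_sum_right)
  also have "\<dots> = (\<Sum>\<alpha>\<in>P. \<Sum>\<gamma>\<in>G. (w \<gamma> * real (cf \<gamma> \<alpha>)) *\<^sub>R \<alpha>)"
    by (rule sum.swap)
  also have "\<dots> = (\<Sum>\<alpha>\<in>P. (\<Sum>\<gamma>\<in>G. w \<gamma> * real (cf \<gamma> \<alpha>)) *\<^sub>R \<alpha>)"
    by (simp add: scaleR_sum_left)
  finally show ?thesis .
qed

lemma inner_coord:
  assumes "nat_comb P \<beta>"
  shows "\<beta> \<bullet> H = (\<Sum>\<alpha>\<in>P. real (cf \<beta> \<alpha>) * (\<alpha> \<bullet> H))"
  using cf[OF assms] by (metis (no_types, lifting) inner_scaleR_left inner_sum_left sum.cong)

definition Uset where "Uset \<Gamma> = {\<beta> \<in> pos_roots R P. \<exists>\<gamma>\<in>\<Gamma>. root_le P \<gamma> \<beta>}"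
definition Lset where "Lset \<Gamma> = {\<beta> \<in> pos_roots R P. \<exists>\<gamma>\<in>\<Gamma>. root_le P \<beta> \<gamma>}"

lemma dctx_inst:
  assumes ac: "antichain R P \<Gamma>"
  shows "dctx R P (Uset \<Gamma>) (Lset \<Gamma>)"
proof unfold_locales
  show "Uset \<Gamma> \<subseteq> pos_roots R P" by (auto simp: Uset_def)
  show "Lset \<Gamma> \<subseteq> pos_roots R P" by (auto simp: Lset_def)
  show "\<beta>' \<in> Uset \<Gamma>" if "\<beta> \<in> Uset \<Gamma>" "\<beta>' \<in> pos_roots R P" "root_le P \<beta> \<beta>'" for \<beta> \<beta>'
    using that le_trans by (auto simp: Uset_def)
  show "\<beta>' \<in> Lset \<Gamma>" if "\<beta> \<in> Lset \<Gamma>" "\<beta>' \<in> pos_roots R P" "root_le P \<beta>' \<beta>" for \<beta> \<beta>'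
    using that le_trans by (auto simp: Lset_def)
  show "\<gamma> = \<delta>" if g: "\<gamma> \<in> Uset \<Gamma>" and d: "\<delta> \<in> Lset \<Gamma>" and le: "root_le P \<gamma> \<delta>" for \<gamma> \<delta>
  proof -
    obtain g1 where g1: "g1 \<in> \<Gamma>" "root_le P g1 \<gamma>" using g by (auto simp: Uset_def)
    obtain g2 where g2: "g2 \<in> \<Gamma>" "root_le P \<delta> g2" using d by (auto simp: Lset_def)
    have "root_le P g1 g2" using le_trans[OF le_trans[OF g1(2) le] g2(2)] .
    then have "g1 = g2" using ac g1(1) g2(1) unfolding antichain_def by blast
    then have "root_le P \<gamma> g1" "root_le P \<delta> g1" "root_le P g1 \<delta>"
      using le_trans[OF le g2(2)] g2(2) le_trans[OF g1(2) le] by auto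
    then have "\<gamma> = g1" "\<delta> = g1" using le_antisym g1(2) by auto
    then show ?thesis by simp
  qed
qed

lemma Gamma_UL: "antichain R P \<Gamma> \<Longrightarrow> \<Gamma> \<subseteq> Uset \<Gamma> \<and> \<Gamma> \<subseteq> Lset \<Gamma>"
  unfolding antichain_def Uset_def Lset_def using le_refl by auto

lemma intcert:
  assumes ac: "antichain R P \<Gamma>" and fin: "finite \<Gamma>"
    and eq: "(\<Sum>\<gamma>\<in>\<Gamma>. of_int (z \<gamma>) *\<^sub>R \<gamma>) = (\<Sum>\<alpha>\<in>P. of_nat (c \<alpha>) *\<^sub>R \<alpha>)"
    and sz: "(\<Sum>\<gamma>\<in>\<Gamma>. z \<gamma>) = 0"
  shows "\<forall>\<alpha>\<in>P. c \<alpha> = 0"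
proof -
  interpret d: dctx R P "Uset \<Gamma>" "Lset \<Gamma>" using dctx_inst[OF ac] .
  define MA where "MA = (\<Sum>\<gamma>\<in>\<Gamma>. replicate_mset (nat (- z \<gamma>)) \<gamma>)"
  define MB where "MB = (\<Sum>\<gamma>\<in>\<Gamma>. replicate_mset (nat (z \<gamma>)) \<gamma>)"
  define MV where "MV = (\<Sum>\<alpha>\<in>P. replicate_mset (c \<alpha>) \<alpha>)"
  note rA = rep_mset[OF fin, of "\<lambda>\<gamma>. nat (- z \<gamma>)", folded MA_def]
  note rB = rep_mset[OF fin, of "\<lambda>\<gamma>. nat (z \<gamma>)", folded MB_def]
  note rV = rep_mset[OF finP, of c, folded MV_def]
  have GUL: "\<Gamma> \<subseteq> Uset \<Gamma>" "\<Gamma> \<subseteq> Lset \<Gamma>" using Gamma_UL[OF ac] by auto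
  have "sum_mset MB - sum_mset MA = (\<Sum>\<gamma>\<in>\<Gamma>. (real (nat (z \<gamma>)) - real (nat (- z \<gamma>))) *\<^sub>R \<gamma>)"
    using rA rB by (simp add: sum_subtractf scaleR_diff_left)
  also have "\<dots> = (\<Sum>\<gamma>\<in>\<Gamma>. of_int (z \<gamma>) *\<^sub>R \<gamma>)"
    by (intro sum.cong refl) (auto simp: of_nat_nat)
  also have "\<dots> = sum_mset MV" using eq rV by simp
  finally have smeq: "sum_mset MB = sum_mset MA + sum_mset MV" by (simp add: algebra_simps)
  have "int (size MB) - int (size MA) = (\<Sum>\<gamma>\<in>\<Gamma>. int (nat (z \<gamma>)) - int (nat (- z \<gamma>)))"
    using rA rB by (simp add: sum_subtractf)
  also have "\<dots> = (\<Sum>\<gamma>\<in>\<Gamma>. z \<gamma>)" by (intro sum.cong) auto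
  finally have szeq: "size MB = size MA" using sz by simp
  have "d.cfg MA MB MV" unfolding d.cfg_def using rA rB rV GUL smeq szeq by auto
  then have "MV = {#}" using d.no_bad[of MA MB MV] unfolding d.bad_def using szeq by simp
  then have "(\<Sum>\<alpha>\<in>P. c \<alpha>) = 0" using rV by simp
  then show ?thesis using finP by simp
qed

lemma realcert:
  assumes ac: "antichain R P \<Gamma>" and fin: "finite \<Gamma>"
    and cnn: "\<forall>\<alpha>\<in>P. c \<alpha> \<ge> 0"
    and eq: "(\<Sum>\<gamma>\<in>\<Gamma>. z \<gamma> *\<^sub>R \<gamma>) = (\<Sum>\<alpha>\<in>P. c \<alpha> *\<^sub>R \<alpha>)"
    and sz: "(\<Sum>\<gamma>\<in>\<Gamma>. z \<gamma>) = 0"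
  shows "\<forall>\<alpha>\<in>P. c \<alpha> = 0"
proof (rule ccontr)
  assume "\<not> ?thesis"
  then obtain \<alpha>0 where a0: "\<alpha>0 \<in> P" "c \<alpha>0 > 0" using cnn by force
  have Gpos: "\<Gamma> \<subseteq> pos_roots R P" using ac unfolding antichain_def by auto
  have coord0: "(\<Sum>\<gamma>\<in>\<Gamma>. w \<gamma> *\<^sub>R \<gamma>) - (\<Sum>\<alpha>\<in>P. u \<alpha> *\<^sub>R \<alpha>) =
      (\<Sum>\<alpha>\<in>P. ((\<Sum>\<gamma>\<in>\<Gamma>. w \<gamma> * real (cf \<gamma> \<alpha>)) - u \<alpha>) *\<^sub>R \<alpha>)" for w u
    using vec_coord[OF fin Gpos, of w] by (simp add: sum_subtractf scaleR_diff_left)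
  have coordz: "\<forall>\<alpha>\<in>P. (\<Sum>\<gamma>\<in>\<Gamma>. z \<gamma> * real (cf \<gamma> \<alpha>)) - c \<alpha> = 0"
    using indep_coeffs_zero[OF indP finP, of "\<lambda>\<alpha>. (\<Sum>\<gamma>\<in>\<Gamma>. z \<gamma> * real (cf \<gamma> \<alpha>)) - c \<alpha>"] coord0[of z c] eq
    by simp
  define I :: "('a + 'a) set" where "I = Inl ` \<Gamma> \<union> Inr ` P"
  have finI: "finite I" using fin finP by (simp add: I_def)
  define x :: "'a + 'a \<Rightarrow> real" where "x = case_sum z c"
  define ind :: "'a + 'a \<Rightarrow> 'a + 'a \<Rightarrow> real" where "ind = (\<lambda>i j. if j = i then 1 else 0)"
  define fa where "fa = (\<lambda>\<alpha>'. case_sum (\<lambda>\<gamma>. real (cf \<gamma> \<alpha>')) (\<lambda>\<alpha>. if \<alpha> = \<alpha>' then -1 else (0::real)))"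
  define fz :: "'a + 'a \<Rightarrow> real" where "fz = case_sum (\<lambda>_. 1) (\<lambda>_. 0)"
  define F where "F = ((\<lambda>\<alpha>'. (fa \<alpha>', 0::real)) ` P) \<union> {(fz, 0)} \<union> ((\<lambda>i. (ind i, 0)) ` {i\<in>I. x i = 0})"
  define G where "G = (\<lambda>i. ((\<lambda>j. sgn (x i) * ind i j), 0::real)) ` {i\<in>I. x i \<noteq> 0}"
  have sumI: "(\<Sum>j\<in>I. f j) = (\<Sum>\<gamma>\<in>\<Gamma>. f (Inl \<gamma>)) + (\<Sum>\<alpha>\<in>P. f (Inr \<alpha>))" for f :: "'a + 'a \<Rightarrow> real"
    unfolding I_def using sum_Inl_Inr[OF fin finP] .
  have ev_fa: "(\<Sum>j\<in>I. fa \<alpha>' j * y j) = (\<Sum>\<gamma>\<in>\<Gamma>. y (Inl \<gamma>) * real (cf \<gamma> \<alpha>')) - y (Inr \<alpha>')"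
    if "\<alpha>' \<in> P" for \<alpha>' y
  proof -
    have "(\<Sum>\<alpha>\<in>P. fa \<alpha>' (Inr \<alpha>) * y (Inr \<alpha>)) = (\<Sum>\<alpha>\<in>P. if \<alpha> = \<alpha>' then - y (Inr \<alpha>) else 0)"
      by (intro sum.cong) (auto simp: fa_def)
    also have "\<dots> = - y (Inr \<alpha>')" using that finP by (simp add: sum.delta')
    finally show ?thesis unfolding sumI by (simp add: fa_def mult.commute)
  qed
  have ev_fz: "(\<Sum>j\<in>I. fz j * y j) = (\<Sum>\<gamma>\<in>\<Gamma>. y (Inl \<gamma>))" for y
    unfolding sumI by (simp add: fz_def)
  have ev_ind: "(\<Sum>j\<in>I. ind i j * y j) = y i" if "i \<in> I" for i y
  proof -
    have "(\<Sum>j\<in>I. ind i j * y j) = (\<Sum>j\<in>I. if j = i then y j else 0)"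
      by (intro sum.cong) (auto simp: ind_def)
    also have "\<dots> = y i" using that finI by (simp add: sum.delta')
    finally show ?thesis .
  qed
  have ev_g: "(\<Sum>j\<in>I. sgn (x i) * ind i j * y j) = sgn (x i) * y i" if "i \<in> I" for i y
    using ev_ind[OF that, of y] by (simp add: mult.assoc sum_distrib_left[symmetric])
  have Frat: "\<forall>(f,c)\<in>F. (\<forall>i. f i \<in> \<rat>) \<and> c \<in> \<rat>"
  proof -
    have "\<forall>j. fa \<alpha>' j \<in> \<rat>" for \<alpha>' by (auto simp: fa_def split: sum.split)
    moreover have "\<forall>j. fz j \<in> \<rat>" by (auto simp: fz_def split: sum.split)
    moreover have "\<forall>j. ind i j \<in> \<rat>" for i by (auto simp: ind_def)
    ultimately show ?thesis by (auto simp: F_def)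
  qed
  have Grat: "\<forall>(g,d)\<in>G. (\<forall>i. g i \<in> \<rat>) \<and> d \<in> \<rat>"
  proof -
    have "sgn r \<in> \<rat>" for r :: real by (cases "r > 0"; cases "r < 0") (auto simp: sgn_real_def)
    then show ?thesis by (auto simp: G_def ind_def)
  qed
  have finG: "finite G" using finI by (simp add: G_def)
  have Fx: "\<forall>(f,c)\<in>F. (\<Sum>j\<in>I. f j * x j) + c = 0"
  proof -
    have "(\<Sum>j\<in>I. fa \<alpha>' j * x j) = 0" if "\<alpha>' \<in> P" for \<alpha>'
      using ev_fa[OF that, of x] coordz that by (simp add: x_def mult.commute)
    moreover have "(\<Sum>j\<in>I. fz j * x j) = 0" using ev_fz[of x] sz by (simp add: x_def)
    moreover have "(\<Sum>j\<in>I. ind i j * x j) = 0" if "i \<in> I" "x i = 0" for i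
      using ev_ind[OF that(1), of x] that(2) by simp
    ultimately show ?thesis by (auto simp: F_def)
  qed
  have Gx: "\<forall>(g,d)\<in>G. (\<Sum>j\<in>I. g j * x j) + d > 0"
  proof -
    have "(\<Sum>j\<in>I. sgn (x i) * ind i j * x j) > 0" if "i \<in> I" "x i \<noteq> 0" for i
      using ev_g[OF that(1), of x] that(2) by (cases "x i > 0") (auto simp: sgn_if)
    then show ?thesis by (auto simp: G_def)
  qed
  obtain q where q: "\<forall>i\<in>I. q i \<in> \<rat>" "\<forall>(f,c)\<in>F. (\<Sum>j\<in>I. f j * q j) + c = 0"
    "\<forall>(g,d)\<in>G. (\<Sum>j\<in>I. g j * q j) + d > 0"
    using rat_solution[OF finI finG Frat Grat Fx Gx] by blast
  have qfa: "(\<Sum>\<gamma>\<in>\<Gamma>. q (Inl \<gamma>) * real (cf \<gamma> \<alpha>')) - q (Inr \<alpha>') = 0" if "\<alpha>' \<in> P" for \<alpha>'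
  proof -
    have "(fa \<alpha>', 0) \<in> F" using that by (auto simp: F_def)
    then have "(\<Sum>j\<in>I. fa \<alpha>' j * q j) = 0" using q(2) by fastforce
    then show ?thesis using ev_fa[OF that, of q] by simp
  qed
  have qfz: "(\<Sum>\<gamma>\<in>\<Gamma>. q (Inl \<gamma>)) = 0"
  proof -
    have "(fz, 0) \<in> F" by (auto simp: F_def)
    then have "(\<Sum>j\<in>I. fz j * q j) = 0" using q(2) by fastforce
    then show ?thesis using ev_fz[of q] by simp
  qed
  have qzero: "q i = 0" if "i \<in> I" "x i = 0" for i
  proof -
    have "(ind i, 0) \<in> F" using that by (auto simp: F_def)
    then have "(\<Sum>j\<in>I. ind i j * q j) = 0" using q(2) by fastforce
    then show ?thesis using ev_ind[OF that(1), of q] by simp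
  qed
  have qsgn: "sgn (x i) * q i > 0" if "i \<in> I" "x i \<noteq> 0" for i
  proof -
    have "((\<lambda>j. sgn (x i) * ind i j), 0) \<in> G" using that by (auto simp: G_def)
    then have "(\<Sum>j\<in>I. sgn (x i) * ind i j * q j) > 0" using q(3) by fastforce
    then show ?thesis using ev_g[OF that(1), of q] by simp
  qed
  have qc_nn: "q (Inr \<alpha>) \<ge> 0" if "\<alpha> \<in> P" for \<alpha>
  proof (cases "c \<alpha> = 0")
    case True then show ?thesis using qzero[of "Inr \<alpha>"] that by (simp add: I_def x_def)
  next
    case False
    then have "c \<alpha> > 0" using cnn that by force
    then show ?thesis using qsgn[of "Inr \<alpha>"] that by (simp add: I_def x_def)
  qed
  have qc0: "q (Inr \<alpha>0) > 0"
    using qsgn[of "Inr \<alpha>0"] a0 by (simp add: I_def x_def)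
  obtain D :: nat where D: "D > 0" "\<forall>i\<in>I. real D * q i \<in> \<int>" using common_denom[OF finI q(1)] by blast
  define zi where "zi = (\<lambda>\<gamma>. \<lfloor>real D * q (Inl \<gamma>)\<rfloor>)"
  define ci where "ci = (\<lambda>\<alpha>. nat \<lfloor>real D * q (Inr \<alpha>)\<rfloor>)"
  have zi: "of_int (zi \<gamma>) = real D * q (Inl \<gamma>)" if "\<gamma> \<in> \<Gamma>" for \<gamma>
  proof -
    have "real D * q (Inl \<gamma>) \<in> \<int>" using D(2) that by (auto simp: I_def)
    then show ?thesis unfolding zi_def by (metis Ints_cases floor_of_int)
  qed
  have ci: "real (ci \<alpha>) = real D * q (Inr \<alpha>)" if "\<alpha> \<in> P" for \<alpha>
  proof -
    have "real D * q (Inr \<alpha>) \<in> \<int>" using D(2) that by (auto simp: I_def)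
    then obtain k where k: "real D * q (Inr \<alpha>) = of_int k" by (rule Ints_cases)
    moreover have "real D * q (Inr \<alpha>) \<ge> 0" using qc_nn[OF that] by simp
    ultimately show ?thesis unfolding ci_def by simp
  qed
  have veq: "(\<Sum>\<gamma>\<in>\<Gamma>. of_int (zi \<gamma>) *\<^sub>R \<gamma>) = (\<Sum>\<alpha>\<in>P. of_nat (ci \<alpha>) *\<^sub>R \<alpha>)"
  proof -
    have "(\<Sum>\<gamma>\<in>\<Gamma>. real_of_int (zi \<gamma>) *\<^sub>R \<gamma>) - (\<Sum>\<alpha>\<in>P. real (ci \<alpha>) *\<^sub>R \<alpha>) =
      (\<Sum>\<alpha>\<in>P. ((\<Sum>\<gamma>\<in>\<Gamma>. real_of_int (zi \<gamma>) * real (cf \<gamma> \<alpha>)) - real (ci \<alpha>)) *\<^sub>R \<alpha>)"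
      by (rule coord0)
    also have "\<dots> = (\<Sum>\<alpha>\<in>P. 0 *\<^sub>R \<alpha>)"
    proof (intro sum.cong refl)
      fix \<alpha> assume a: "\<alpha> \<in> P"
      have "(\<Sum>\<gamma>\<in>\<Gamma>. real_of_int (zi \<gamma>) * real (cf \<gamma> \<alpha>)) - real (ci \<alpha>)
          = real D * ((\<Sum>\<gamma>\<in>\<Gamma>. q (Inl \<gamma>) * real (cf \<gamma> \<alpha>)) - q (Inr \<alpha>))"
        using zi ci[OF a] by (simp add: sum_distrib_left right_diff_distrib mult.assoc)
      then show "((\<Sum>\<gamma>\<in>\<Gamma>. real_of_int (zi \<gamma>) * real (cf \<gamma> \<alpha>)) - real (ci \<alpha>)) *\<^sub>R \<alpha> = 0 *\<^sub>R \<alpha>"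
        using qfa[OF a] by simp
    qed
    finally show ?thesis by simp
  qed
  have zsum: "(\<Sum>\<gamma>\<in>\<Gamma>. zi \<gamma>) = 0"
  proof -
    have "real_of_int (\<Sum>\<gamma>\<in>\<Gamma>. zi \<gamma>) = real D * (\<Sum>\<gamma>\<in>\<Gamma>. q (Inl \<gamma>))"
      using zi by (simp add: sum_distrib_left)
    then have "real_of_int (\<Sum>\<gamma>\<in>\<Gamma>. zi \<gamma>) = 0" using qfz by simp
    then show ?thesis by (simp only: of_int_eq_0_iff)
  qed
  have "ci \<alpha>0 = 0" using intcert[OF ac fin veq zsum] a0(1) by blast
  moreover have "real (ci \<alpha>0) > 0" using ci[OF a0(1)] qc0 D(1) by simp
  ultimately show False by simp
qed

lemma separation:
  assumes ac: "antichain R P \<Gamma>" and fin: "finite \<Gamma>" and g0: "\<gamma>0 \<in> \<Gamma>"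
  shows "\<exists>a. (\<forall>\<alpha>\<in>P. a \<bullet> \<alpha> > 0) \<and> (\<forall>\<gamma>\<in>\<Gamma>. a \<bullet> \<gamma> = a \<bullet> \<gamma>0)"
proof -
  have Gpos: "\<Gamma> \<subseteq> pos_roots R P" using ac unfolding antichain_def by auto
  define W where "W = span ((\<lambda>\<gamma>. \<gamma> - \<gamma>0) ` \<Gamma>)"
  define K where "K = convex hull P"
  define S where "S = (\<Union>x\<in>K. \<Union>y\<in>W. {x + y})"
  have cS: "convex S" unfolding S_def K_def W_def
    by (intro convex_sums convex_convex_hull subspace_imp_convex subspace_span)
  have "compact K" unfolding K_def by (rule compact_convex_hull[OF finite_imp_compact[OF finP]])
  moreover have "closed W" unfolding W_def by simp
  ultimately have clS: "closed S" unfolding S_def by (rule compact_closed_sums)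
  have memS: "x \<in> K \<Longrightarrow> y \<in> W \<Longrightarrow> x + y \<in> S" for x y unfolding S_def by auto
  have nS: "0 \<notin> S"
  proof
    assume "0 \<in> S"
    then obtain p w where pw: "p \<in> K" "w \<in> W" "p + w = 0" unfolding S_def by auto
    then have pW: "p \<in> W" using span_neg[of w] unfolding W_def by (metis add.inverse_unique add.commute)
    obtain u where u: "\<forall>x\<in>P. 0 \<le> u x" "sum u P = 1" "(\<Sum>x\<in>P. u x *\<^sub>R x) = p"
      using pw(1) unfolding K_def convex_hull_finite[OF finP] by blast
    define V where "V = (\<lambda>\<gamma>. \<gamma> - \<gamma>0) ` \<Gamma>"
    have finV: "finite V" using fin by (simp add: V_def)
    obtain t where t: "p = (\<Sum>v\<in>V. t v *\<^sub>R v)"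
      using pW unfolding W_def V_def[symmetric] span_finite[OF finV] by blast
    have inj: "inj_on (\<lambda>\<gamma>. \<gamma> - \<gamma>0) \<Gamma>" by (auto simp: inj_on_def)
    define y where "y = (\<lambda>\<gamma>. t (\<gamma> - \<gamma>0))"
    have p2: "p = (\<Sum>\<gamma>\<in>\<Gamma>. y \<gamma> *\<^sub>R (\<gamma> - \<gamma>0))"
      unfolding t V_def by (simp add: sum.reindex[OF inj] y_def)
    define z where "z = (\<lambda>\<gamma>. y \<gamma> - (if \<gamma> = \<gamma>0 then sum y \<Gamma> else 0))"
    have "(\<Sum>\<gamma>\<in>\<Gamma>. z \<gamma> *\<^sub>R \<gamma>) = (\<Sum>\<gamma>\<in>\<Gamma>. y \<gamma> *\<^sub>R \<gamma> - (if \<gamma> = \<gamma>0 then sum y \<Gamma> *\<^sub>R \<gamma> else 0))"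
      by (intro sum.cong refl) (auto simp: z_def scaleR_diff_left)
    also have "\<dots> = (\<Sum>\<gamma>\<in>\<Gamma>. y \<gamma> *\<^sub>R \<gamma>) - (\<Sum>\<gamma>\<in>\<Gamma>. (if \<gamma> = \<gamma>0 then sum y \<Gamma> *\<^sub>R \<gamma> else 0))"
      by (simp only: sum_subtractf)
    also have "\<dots> = (\<Sum>\<gamma>\<in>\<Gamma>. y \<gamma> *\<^sub>R \<gamma>) - sum y \<Gamma> *\<^sub>R \<gamma>0"
      using g0 fin by (simp add: sum.delta')
    also have "\<dots> = p" unfolding p2
      by (simp add: scaleR_diff_right sum_subtractf scaleR_sum_left)
    finally have ze: "(\<Sum>\<gamma>\<in>\<Gamma>. z \<gamma> *\<^sub>R \<gamma>) = (\<Sum>x\<in>P. u x *\<^sub>R x)" using u(3) by simp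
    have zs: "(\<Sum>\<gamma>\<in>\<Gamma>. z \<gamma>) = 0"
      unfolding z_def using g0 fin by (simp add: sum_subtractf sum.delta')
    have "\<forall>\<alpha>\<in>P. u \<alpha> = 0" using realcert[OF ac fin u(1) ze zs] .
    then have "sum u P = 0" by simp
    then show False using u(2) by simp
  qed
  obtain a b where ab: "a \<noteq> 0" "0 < b" "\<forall>x\<in>S. a \<bullet> x > b"
    using separating_hyperplane_closed_0[OF cS clS nS] by blast
  have Pne: "P \<noteq> {}"
  proof
    assume "P = {}"
    then have "\<gamma>0 = 0" using cf[OF pos_nc, of \<gamma>0] Gpos g0 by auto
    then show False using pos_ne0 Gpos g0 by auto
  qed
  then obtain \<alpha>1 where a1: "\<alpha>1 \<in> P" by blast
  have K1: "\<alpha> \<in> K" if "\<alpha> \<in> P" for \<alpha> unfolding K_def using that by (rule hull_inc)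
  have posP: "a \<bullet> \<alpha> > 0" if "\<alpha> \<in> P" for \<alpha>
  proof -
    have "0 \<in> W" unfolding W_def by (rule span_zero)
    then have "\<alpha> + 0 \<in> S" using memS[OF K1[OF that]] by blast
    then show ?thesis using ab by fastforce
  qed
  have eqG: "a \<bullet> \<gamma> = a \<bullet> \<gamma>0" if g: "\<gamma> \<in> \<Gamma>" for \<gamma>
  proof (rule ccontr)
    assume ne: "a \<bullet> \<gamma> \<noteq> a \<bullet> \<gamma>0"
    define w where "w = \<gamma> - \<gamma>0"
    have wW: "w \<in> W" unfolding W_def w_def using g by (intro span_base) auto
    have aw: "a \<bullet> w \<noteq> 0" using ne by (simp add: w_def inner_diff_right)
    define s where "s = - (a \<bullet> \<alpha>1) / (a \<bullet> w)"
    have "s *\<^sub>R w \<in> W" using wW unfolding W_def by (rule span_mul)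
    then have "\<alpha>1 + s *\<^sub>R w \<in> S" using memS[OF K1[OF a1]] by blast
    then have "a \<bullet> (\<alpha>1 + s *\<^sub>R w) > b" using ab by blast
    moreover have "a \<bullet> (\<alpha>1 + s *\<^sub>R w) = a \<bullet> \<alpha>1 + s * (a \<bullet> w)" by (simp add: inner_add_right)
    moreover have "s * (a \<bullet> w) = - (a \<bullet> \<alpha>1)" using aw by (simp add: s_def)
    ultimately show False using ab by simp
  qed
  show ?thesis using posP eqG by blast
qed

lemma primal:
  assumes ac: "antichain R P \<Gamma>" and fin: "finite \<Gamma>" and g0: "\<gamma>0 \<in> \<Gamma>"
    and apos: "\<forall>\<alpha>\<in>P. a \<bullet> \<alpha> > 0" and aeq: "\<forall>\<gamma>\<in>\<Gamma>. a \<bullet> \<gamma> = a \<bullet> \<gamma>0"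
  shows "\<exists>H. \<exists>n::nat. n > 0 \<and> (\<forall>\<alpha>\<in>P. \<exists>k::nat. k > 0 \<and> \<alpha> \<bullet> H = real k) \<and> (\<forall>\<gamma>\<in>\<Gamma>. \<gamma> \<bullet> H = real n)"
proof -
  have Gpos: "\<Gamma> \<subseteq> pos_roots R P" using ac unfolding antichain_def by auto
  have ip: "a \<bullet> \<gamma> = (\<Sum>\<alpha>\<in>P. real (cf \<gamma> \<alpha>) * (a \<bullet> \<alpha>))" if "\<gamma> \<in> \<Gamma>" for \<gamma>
  proof -
    have gp: "\<gamma> \<in> pos_roots R P" using Gpos that by auto
    have "\<gamma> \<bullet> a = (\<Sum>\<alpha>\<in>P. real (cf \<gamma> \<alpha>) * (\<alpha> \<bullet> a))" by (rule inner_coord[OF pos_nc[OF gp]])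
    then show ?thesis by (simp add: inner_commute)
  qed
  define ind :: "'a \<Rightarrow> 'a \<Rightarrow> real" where "ind = (\<lambda>\<alpha> \<beta>. if \<beta> = \<alpha> then 1 else 0)"
  define F where "F = (\<lambda>\<gamma>. ((\<lambda>\<alpha>. real (cf \<gamma> \<alpha>) - real (cf \<gamma>0 \<alpha>)), 0::real)) ` \<Gamma>"
  define G where "G = (\<lambda>\<alpha>. (ind \<alpha>, 0::real)) ` P"
  define x where "x = (\<lambda>\<alpha>. a \<bullet> \<alpha>)"
  have ev_ind: "(\<Sum>\<beta>\<in>P. ind \<alpha> \<beta> * y \<beta>) = y \<alpha>" if "\<alpha> \<in> P" for \<alpha> y
  proof -
    have "(\<Sum>\<beta>\<in>P. ind \<alpha> \<beta> * y \<beta>) = (\<Sum>\<beta>\<in>P. if \<beta> = \<alpha> then y \<beta> else 0)"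
      by (intro sum.cong) (auto simp: ind_def)
    also have "\<dots> = y \<alpha>" using that finP by (simp add: sum.delta')
    finally show ?thesis .
  qed
  have Frat: "\<forall>(f,c)\<in>F. (\<forall>i. f i \<in> \<rat>) \<and> c \<in> \<rat>" by (auto simp: F_def)
  have Grat: "\<forall>(g,d)\<in>G. (\<forall>i. g i \<in> \<rat>) \<and> d \<in> \<rat>" by (auto simp: G_def ind_def)
  have finG: "finite G" using finP by (simp add: G_def)
  have Fx: "\<forall>(f,c)\<in>F. (\<Sum>\<alpha>\<in>P. f \<alpha> * x \<alpha>) + c = 0"
  proof -
    have "(\<Sum>\<alpha>\<in>P. (real (cf \<gamma> \<alpha>) - real (cf \<gamma>0 \<alpha>)) * x \<alpha>) = 0" if "\<gamma> \<in> \<Gamma>" for \<gamma>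
    proof -
      have "(\<Sum>\<alpha>\<in>P. (real (cf \<gamma> \<alpha>) - real (cf \<gamma>0 \<alpha>)) * x \<alpha>)
          = (\<Sum>\<alpha>\<in>P. real (cf \<gamma> \<alpha>) * (a \<bullet> \<alpha>)) - (\<Sum>\<alpha>\<in>P. real (cf \<gamma>0 \<alpha>) * (a \<bullet> \<alpha>))"
        by (simp add: x_def left_diff_distrib sum_subtractf)
      also have "\<dots> = a \<bullet> \<gamma> - a \<bullet> \<gamma>0" using ip[OF that] ip[OF g0] by simp
      also have "\<dots> = 0" using aeq that by simp
      finally show ?thesis .
    qed
    then show ?thesis by (auto simp: F_def)
  qed
  have Gx: "\<forall>(g,d)\<in>G. (\<Sum>\<alpha>\<in>P. g \<alpha> * x \<alpha>) + d > 0"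
    using ev_ind apos by (auto simp: G_def x_def)
  obtain q where q: "\<forall>\<alpha>\<in>P. q \<alpha> \<in> \<rat>" "\<forall>(f,c)\<in>F. (\<Sum>\<alpha>\<in>P. f \<alpha> * q \<alpha>) + c = 0"
    "\<forall>(g,d)\<in>G. (\<Sum>\<alpha>\<in>P. g \<alpha> * q \<alpha>) + d > 0"
    using rat_solution[OF finP finG Frat Grat Fx Gx] by blast
  have qpos: "q \<alpha> > 0" if "\<alpha> \<in> P" for \<alpha>
  proof -
    have "(ind \<alpha>, 0) \<in> G" using that by (auto simp: G_def)
    then have "(\<Sum>\<beta>\<in>P. ind \<alpha> \<beta> * q \<beta>) > 0" using q(3) by fastforce
    then show ?thesis using ev_ind[OF that] by simp
  qed
  have qeq: "(\<Sum>\<alpha>\<in>P. (real (cf \<gamma> \<alpha>) - real (cf \<gamma>0 \<alpha>)) * q \<alpha>) = 0" if "\<gamma> \<in> \<Gamma>" for \<gamma>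
  proof -
    have "((\<lambda>\<alpha>. real (cf \<gamma> \<alpha>) - real (cf \<gamma>0 \<alpha>)), 0) \<in> F" using that by (auto simp: F_def)
    then show ?thesis using q(2) by fastforce
  qed
  obtain D :: nat where D: "D > 0" "\<forall>\<alpha>\<in>P. real D * q \<alpha> \<in> \<int>" using common_denom[OF finP q(1)] by blast
  define k where "k = (\<lambda>\<alpha>. nat \<lfloor>real D * q \<alpha>\<rfloor>)"
  have kq: "real (k \<alpha>) = real D * q \<alpha>" if "\<alpha> \<in> P" for \<alpha>
  proof -
    have "real D * q \<alpha> \<in> \<int>" using D(2) that by blast
    then obtain m where m: "real D * q \<alpha> = of_int m" by (rule Ints_cases)
    moreover have "real D * q \<alpha> \<ge> 0" using qpos[OF that] by simp
    ultimately show ?thesis unfolding k_def by simp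
  qed
  have kpos: "k \<alpha> > 0" if "\<alpha> \<in> P" for \<alpha>
  proof -
    have "real (k \<alpha>) > 0" using kq[OF that] qpos[OF that] D(1) by simp
    then show ?thesis by simp
  qed
  obtain H where H: "\<forall>\<alpha>\<in>P. \<alpha> \<bullet> H = real (k \<alpha>)" using exists_dual_vec[OF indP, of "\<lambda>\<alpha>. real (k \<alpha>)"] by blast
  have gH: "\<gamma> \<bullet> H = (\<Sum>\<alpha>\<in>P. real (cf \<gamma> \<alpha>) * real (k \<alpha>))" if "\<gamma> \<in> \<Gamma>" for \<gamma>
  proof -
    have gp: "\<gamma> \<in> pos_roots R P" using Gpos that by auto
    have "\<gamma> \<bullet> H = (\<Sum>\<alpha>\<in>P. real (cf \<gamma> \<alpha>) * (\<alpha> \<bullet> H))" by (rule inner_coord[OF pos_nc[OF gp]])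
    also have "\<dots> = (\<Sum>\<alpha>\<in>P. real (cf \<gamma> \<alpha>) * real (k \<alpha>))" using H by (intro sum.cong) auto
    finally show ?thesis .
  qed
  define n where "n = (\<Sum>\<alpha>\<in>P. cf \<gamma>0 \<alpha> * k \<alpha>)"
  have nH: "\<gamma>0 \<bullet> H = real n" unfolding n_def using gH[OF g0] by simp
  have allH: "\<gamma> \<bullet> H = real n" if "\<gamma> \<in> \<Gamma>" for \<gamma>
  proof -
    have "\<gamma> \<bullet> H - \<gamma>0 \<bullet> H = (\<Sum>\<alpha>\<in>P. (real (cf \<gamma> \<alpha>) - real (cf \<gamma>0 \<alpha>)) * real (k \<alpha>))"
      using gH[OF that] gH[OF g0] by (simp add: left_diff_distrib sum_subtractf)
    also have "\<dots> = (\<Sum>\<alpha>\<in>P. real D * ((real (cf \<gamma> \<alpha>) - real (cf \<gamma>0 \<alpha>)) * q \<alpha>))"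
      using kq by (intro sum.cong) auto
    also have "\<dots> = real D * (\<Sum>\<alpha>\<in>P. (real (cf \<gamma> \<alpha>) - real (cf \<gamma>0 \<alpha>)) * q \<alpha>)"
      by (simp add: sum_distrib_left)
    also have "\<dots> = 0" using qeq[OF that] by simp
    finally show ?thesis using nH by simp
  qed
  have npos: "n > 0"
  proof -
    have g0p: "\<gamma>0 \<in> pos_roots R P" using Gpos g0 by auto
    have "\<exists>\<alpha>\<in>P. cf \<gamma>0 \<alpha> \<noteq> 0"
    proof (rule ccontr)
      assume "\<not> ?thesis"
      then have "\<gamma>0 = 0" using cf[OF pos_nc[OF g0p]] by simp
      then show False using pos_ne0[OF g0p] by simp
    qed
    then obtain \<alpha> where a: "\<alpha> \<in> P" "cf \<gamma>0 \<alpha> \<noteq> 0" by blast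
    then have "cf \<gamma>0 \<alpha> * k \<alpha> > 0" using kpos[OF a(1)] by simp
    moreover have "cf \<gamma>0 \<alpha> * k \<alpha> \<le> n" unfolding n_def using a(1) finP by (intro member_le_sum) auto
    ultimately show ?thesis by (rule less_le_trans)
  qed
  show ?thesis using npos allH H kpos by blast
qed

lemma main:
  assumes ac: "antichain R P \<Gamma>" and ne: "\<Gamma> \<noteq> {}"
  shows "\<exists>H. \<exists>n::nat. n > 0 \<and> (\<forall>\<alpha>\<in>P. \<exists>k::nat. k > 0 \<and> \<alpha> \<bullet> H = real k) \<and> (\<forall>\<gamma>\<in>\<Gamma>. \<gamma> \<bullet> H = real n)"
proof -
  have "\<Gamma> \<subseteq> R" using ac unfolding antichain_def pos_roots_def by auto
  then have fin: "finite \<Gamma>" using finR finite_subset by blast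
  obtain \<gamma>0 where g0: "\<gamma>0 \<in> \<Gamma>" using ne by blast
  obtain a where a: "\<forall>\<alpha>\<in>P. a \<bullet> \<alpha> > 0" "\<forall>\<gamma>\<in>\<Gamma>. a \<bullet> \<gamma> = a \<bullet> \<gamma>0"
    using separation[OF ac fin g0] by blast
  show ?thesis using primal[OF ac fin g0 a] .
qed

end

theorem theorem4p1:
  fixes R P \<Gamma> :: "'a::euclidean_space set"
  assumes "root_system R" and "is_base R P"
    and "antichain R P \<Gamma>" and "\<Gamma> \<noteq> {}"
  shows "\<exists>H::'a. \<exists>n::nat. n > 0 \<and>
           (\<forall>\<alpha>\<in>P. \<exists>k::nat. k > 0 \<and> \<alpha> \<bullet> H = real k) \<and>
           (\<forall>\<gamma>\<in>\<Gamma>. \<gamma> \<bullet> H = real n)"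
proof -
  interpret rsb R P using assms(1,2) by unfold_locales
  show ?thesis using main[OF assms(3,4)] .
qed

end
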